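(* In the hard-instance construction, fix $k\in[r-1]$, a sub-hypercube $H$ of $\{0,1\}^n$, and any realization of $S_1,B_1,v_1,\dots,S_{k-1},B_{k-1},v_{k-1}$. Then, for all sufficiently large $n$, with probability at least $1-3n^{-(c+5/3)}$ over the random partition of $S_k\cup\dots\cup S_r$ and the randomness of $B_k,v_k,\dots,B_r,v_r$, $$\mu(H)=\Big(\prod_{i\in[k]}\mu_i(H_{S_i})\Big)\cdot 2^{-\mathrm{codim}(H)+\mathrm{codim}(H_{S_1\cup\dots\cup S_k})+\sum_{i>k}a_i}.$$
   Context: $\log$ is base $2$. Hard-instance construction: fix $c>0$; let $r=\frac14\big(\frac{n}{(c+2)\log n}\big)^{1/3}$, $m=n/r=4n^{2/3}((c+2)\log n)^{1/3}$, and $a_i=12\,i\,n^{1/3}((c+2)\log n)^{2/3}$ for $i\in[r]$ (assumed integers). Partition $[n]$ uniformly at random into blocks $S_1,\dots,S_r$ of size $m$. For each $i$ independently, choose $B_i\in\{0,1\}^{(m-a_i)\times m}$ and $v_i\in\{0,1\}^{m-a_i}$ uniformly at random and set $\mu_i(x)=\mathbf 1[B_ix=v_i]$ for $x\in\{0,1\}^{S_i}$ (over $\mathbb F_2$); let $\mu(x)=\prod_{i\in[r]}\mu_i(x_{S_i})$ for $x\in\{0,1\}^n$. A sub-hypercube is $H=\{x\in\{0,1\}^n:x_S=y\}$ with $S\subseteq[n]$, $y\in\{0,1\}^S$; $\mathrm{codim}(H)=|S|$; for $U\subseteq[n]$, $H_U=\{x\in\{0,1\}^U:x_{S\cap U}=y_{S\cap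 U}\}$ with $\mathrm{codim}(H_U)=|S\cap U|$; $\mu(H)=\sum_{x\in H}\mu(x)$ and $\mu_i(H_{S_i})=\sum_{x\in H_{S_i}}\mu_i(x)$. *)

theory Defs
  imports "HOL-Probability.Probability"
begin

definition hi_r :: "real \<Rightarrow> nat \<Rightarrow> real" where
  "hi_r c n = (1/4) * (real n / ((c + 2) * log 2 (real n))) powr (1/3)"

definition hi_m :: "real \<Rightarrow> nat \<Rightarrow> real" where
  "hi_m c n = 4 * real n powr (2/3) * ((c + 2) * log 2 (real n)) powr (1/3)"

definition hi_a :: "real \<Rightarrow> nat \<Rightarrow> nat \<Rightarrow> real" where
  "hi_a c n i = 12 * real i * real n powr (1/3) * ((c + 2) * log 2 (real n)) powr (2/3)"

section \<open>Configurations: ordered partition S_1..S_r of [n] = {1..n} into blocks of size m,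
  matrices B_i (rows j < m - a_i, columns indexed by the elements of S_i) and vectors v_i,
  all over F_2 = bool, encoded extensionally (False outside their index domain).\<close>

type_synonym config = "(nat \<Rightarrow> nat set) \<times> (nat \<Rightarrow> nat \<Rightarrow> nat \<Rightarrow> bool) \<times> (nat \<Rightarrow> nat \<Rightarrow> bool)"

definition cS :: "config \<Rightarrow> nat \<Rightarrow> nat set" where "cS \<omega> = fst \<omega>"
definition cB :: "config \<Rightarrow> nat \<Rightarrow> nat \<Rightarrow> nat \<Rightarrow> bool" where "cB \<omega> = fst (snd \<omega>)"
definition cv :: "config \<Rightarrow> nat \<Rightarrow> nat \<Rightarrow> bool" where "cv \<omega> = snd (snd \<omega>)"

definition block_partitions :: "nat \<Rightarrow> nat \<Rightarrow> nat \<Rightarrow> (nat \<Rightarrow> nat set) set" where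
  "block_partitions n r m = {S.
      (\<forall>i\<in>{1..r}. S i \<subseteq> {1..n} \<and> card (S i) = m)
    \<and> (\<forall>i\<in>{1..r}. \<forall>j\<in>{1..r}. i \<noteq> j \<longrightarrow> S i \<inter> S j = {})
    \<and> (\<Union>i\<in>{1..r}. S i) = {1..n}
    \<and> (\<forall>i. i \<notin> {1..r} \<longrightarrow> S i = {})}"

definition configs :: "nat \<Rightarrow> nat \<Rightarrow> nat \<Rightarrow> (nat \<Rightarrow> nat) \<Rightarrow> config set" where
  "configs n r m a = {\<omega>.
      cS \<omega> \<in> block_partitions n r m
    \<and> (\<forall>i j l. cB \<omega> i j l \<longrightarrow> i \<in> {1..r} \<and> j < m - a i \<and> l \<in> cS \<omega> i)
    \<and> (\<forall>i j. cv \<omega> i j \<longrightarrow> i \<in> {1..r} \<and> j < m - a i)}"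

definition configs_given :: "nat \<Rightarrow> nat \<Rightarrow> nat \<Rightarrow> (nat \<Rightarrow> nat) \<Rightarrow> nat \<Rightarrow> config \<Rightarrow> config set" where
  "configs_given n r m a k \<omega>0 = {\<omega> \<in> configs n r m a.
      \<forall>i\<in>{1..<k}. cS \<omega> i = cS \<omega>0 i \<and> cB \<omega> i = cB \<omega>0 i \<and> cv \<omega> i = cv \<omega>0 i}"

text \<open>mu_i(x) = 1 iff B_i x = v_i over F_2 (x only read on S_i).\<close>
definition block_sat :: "nat \<Rightarrow> (nat \<Rightarrow> nat) \<Rightarrow> config \<Rightarrow> nat \<Rightarrow> (nat \<Rightarrow> bool) \<Rightarrow> bool" where
  "block_sat m a \<omega> i x \<longleftrightarrow>
     (\<forall>j < m - a i. odd (card {l \<in> cS \<omega> i. cB \<omega> i j l \<and> x l}) = cv \<omega> i j)"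

text \<open>mu(H) for H = {x : x_HS = y}.\<close>
definition muH :: "nat \<Rightarrow> nat \<Rightarrow> nat \<Rightarrow> (nat \<Rightarrow> nat) \<Rightarrow> config \<Rightarrow> nat set \<Rightarrow> (nat \<Rightarrow> bool) \<Rightarrow> real" where
  "muH n r m a \<omega> HS y = real (card {x \<in> {1..n} \<rightarrow>\<^sub>E (UNIV :: bool set).
      (\<forall>l\<in>HS. x l = y l) \<and> (\<forall>i\<in>{1..r}. block_sat m a \<omega> i x)})"

definition muiH :: "nat \<Rightarrow> (nat \<Rightarrow> nat) \<Rightarrow> config \<Rightarrow> nat \<Rightarrow> nat set \<Rightarrow> (nat \<Rightarrow> bool) \<Rightarrow> real" where
  "muiH m a \<omega> i HS y = real (card {x \<in> cS \<omega> i \<rightarrow>\<^sub>E (UNIV :: bool set).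
      (\<forall>l\<in>HS \<inter> cS \<omega> i. x l = y l) \<and> block_sat m a \<omega> i x})"

end

theory Submission
  imports Defs
begin

definition psi :: "bool \<Rightarrow> real" where "psi b = (if b then -1 else 1)"

lemma pow_card_prod:
  assumes "finite A"
  shows "(-1::real) ^ card {a\<in>A. P a} = (\<Prod>a\<in>A. psi (P a))"
proof -
  have "(\<Prod>a\<in>A. psi (P a)) = (\<Prod>a\<in>{a\<in>A. P a}. (-1::real))"
    using prod.inter_filter[OF assms, of "\<lambda>_. -1::real" P] by (simp add: psi_def)
  then show ?thesis by simp
qed

lemma char_zero:
  assumes fin: "finite I" and FI: "F \<subseteq> I" and l0: "l0 \<in> F" and z: "z l0"
  shows "(\<Sum>x\<in>{x\<in>I \<rightarrow>\<^sub>E (UNIV::bool set). \<forall>l\<in>I-F. x l = y l}.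
            (-1::real) ^ card {l\<in>I. z l \<and> x l}) = 0"
proof -
  define X where "X = {x\<in>I \<rightarrow>\<^sub>E (UNIV::bool set). \<forall>l\<in>I-F. x l = y l}"
  define \<sigma> where "\<sigma> x = x(l0 := \<not> x l0)" for x :: "'a \<Rightarrow> bool"
  define f where "f x = (-1::real) ^ card {l\<in>I. z l \<and> x l}" for x
  have l0I: "l0 \<in> I" using l0 FI by auto
  have sX: "\<sigma> x \<in> X" if "x \<in> X" for x
    using that l0I l0 unfolding X_def \<sigma>_def by (auto simp: PiE_def extensional_def)
  have ss: "\<sigma> (\<sigma> x) = x" for x unfolding \<sigma>_def by auto
  have bij: "bij_betw \<sigma> X X"
    by (rule bij_betw_byWitness[where f'=\<sigma>]) (use sX ss in auto)
  have neg: "f (\<sigma> x) = - f x" for x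
  proof (cases "x l0")
    case True
    have eq: "{l\<in>I. z l \<and> \<sigma> x l} = {l\<in>I. z l \<and> x l} - {l0}"
      using True unfolding \<sigma>_def by auto
    have "card {l\<in>I. z l \<and> x l} = Suc (card ({l\<in>I. z l \<and> x l} - {l0}))"
      using True z l0I fin by (intro card_Suc_Diff1[symmetric]) auto
    then show ?thesis unfolding f_def eq by simp
  next
    case False
    have eq: "{l\<in>I. z l \<and> x l} = {l\<in>I. z l \<and> \<sigma> x l} - {l0}"
      using False unfolding \<sigma>_def by auto
    have "card {l\<in>I. z l \<and> \<sigma> x l} = Suc (card ({l\<in>I. z l \<and> \<sigma> x l} - {l0}))"
      using False z l0I fin by (intro card_Suc_Diff1[symmetric]) (auto simp: \<sigma>_def)
    then show ?thesis unfolding f_def eq by simp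
  qed
  have "sum f X = sum (\<lambda>x. f (\<sigma> x)) X"
    using sum.reindex_bij_betw[OF bij, of f] by simp
  also have "\<dots> = - sum f X" by (simp add: neg sum_negf)
  finally have "sum f X = 0" by simp
  then show ?thesis unfolding X_def f_def .
qed

lemma char_indicator:
  assumes fin: "finite J"
  shows "(\<Sum>u\<in>J \<rightarrow>\<^sub>E (UNIV::bool set). (-1::real) ^ card {j\<in>J. u j \<and> z j})
         = (if \<forall>j\<in>J. \<not> z j then 2 ^ card J else 0)"
proof (cases "\<forall>j\<in>J. \<not> z j")
  case True
  then have e: "\<And>u. {j\<in>J. u j \<and> z j} = {}" by auto
  have "(\<Sum>u\<in>J \<rightarrow>\<^sub>E (UNIV::bool set). (-1::real) ^ card {j\<in>J. u j \<and> z j})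
        = (\<Sum>u\<in>J \<rightarrow>\<^sub>E (UNIV::bool set). 1)" by (rule sum.cong) (simp_all only: e card.empty power_0)
  also have "\<dots> = real (card (J \<rightarrow>\<^sub>E (UNIV::bool set)))" by simp
  also have "\<dots> = 2 ^ card J" using fin by (simp add: card_PiE)
  finally show ?thesis using True by simp
next
  case False
  then obtain j0 where j0: "j0 \<in> J" "z j0" by auto
  have eq: "J \<rightarrow>\<^sub>E (UNIV::bool set) = {x\<in>J \<rightarrow>\<^sub>E (UNIV::bool set). \<forall>l\<in>J-J. x l = y l}" for y by auto
  show ?thesis
    using char_zero[of J J j0 z undefined, OF fin subset_refl j0(1) j0(2)] False
    by (subst eq[of undefined]) (simp add: conj_commute)
qed

lemma psi_odd: "psi (odd c) = (-1::real) ^ c"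
  by (cases "even c") (simp_all add: psi_def)

lemma parity_identity:
  assumes fin: "finite S"
  shows "(-1::real) ^ card {j\<in>{..<(R::nat)}. u j \<and> (odd (card {l\<in>S. B j l \<and> x l}) \<noteq> v j)}
    = (-1) ^ card {j\<in>{..<R}. u j \<and> v j} *
      (-1) ^ card {l\<in>S. odd (card {j\<in>{..<R}. u j \<and> B j l}) \<and> x l}"
proof -
  define c where "c j = card {l\<in>S. B j l \<and> x l}" for j
  have "(-1::real) ^ card {j\<in>{..<R}. u j \<and> (odd (c j) \<noteq> v j)}
      = (\<Prod>j\<in>{..<R}. psi (u j \<and> v j) * psi (u j \<and> odd (c j)))"
  proof -
    have "(-1::real) ^ card {j\<in>{..<R}. u j \<and> (odd (c j) \<noteq> v j)} = (\<Prod>j\<in>{..<R}. psi (u j \<and> (odd (c j) \<noteq> v j)))"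
      by (rule pow_card_prod) simp
    also have "\<dots> = (\<Prod>j\<in>{..<R}. psi (u j \<and> v j) * psi (u j \<and> odd (c j)))"
      by (rule prod.cong) (auto simp: psi_def)
    finally show ?thesis .
  qed
  also have "\<dots> = (\<Prod>j\<in>{..<R}. psi (u j \<and> v j)) * (\<Prod>j\<in>{..<R}. psi (u j \<and> odd (c j)))"
    by (rule prod.distrib)
  also have "(\<Prod>j\<in>{..<R}. psi (u j \<and> odd (c j))) = (\<Prod>j\<in>{..<R}. \<Prod>l\<in>S. psi (u j \<and> B j l \<and> x l))"
  proof (rule prod.cong)
    fix j
    show "psi (u j \<and> odd (c j)) = (\<Prod>l\<in>S. psi (u j \<and> B j l \<and> x l))"
    proof (cases "u j")
      case True
      then show ?thesis using pow_card_prod[OF fin, of "\<lambda>l. B j l \<and> x l"]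
        by (simp add: psi_odd c_def)
    next
      case False
      then show ?thesis by (simp add: psi_def)
    qed
  qed simp
  also have "\<dots> = (\<Prod>l\<in>S. \<Prod>j\<in>{..<R}. psi (u j \<and> B j l \<and> x l))"
    by (rule prod.swap)
  also have "\<dots> = (\<Prod>l\<in>S. psi (odd (card {j\<in>{..<R}. u j \<and> B j l}) \<and> x l))"
  proof (rule prod.cong)
    fix l
    show "(\<Prod>j\<in>{..<R}. psi (u j \<and> B j l \<and> x l)) = psi (odd (card {j\<in>{..<R}. u j \<and> B j l}) \<and> x l)"
    proof (cases "x l")
      case True
      then show ?thesis using pow_card_prod[of "{..<R}" "\<lambda>j. u j \<and> B j l"]
        by (simp add: psi_odd)
    next
      case False
      then show ?thesis by (simp add: psi_def)
    qed
  qed simp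
  also have "\<dots> = (-1) ^ card {l\<in>S. odd (card {j\<in>{..<R}. u j \<and> B j l}) \<and> x l}"
    by (rule pow_card_prod[OF fin, symmetric])
  also have "(\<Prod>j\<in>{..<R}. psi (u j \<and> v j)) = (-1) ^ card {j\<in>{..<R}. u j \<and> v j}"
    by (rule pow_card_prod[symmetric]) simp
  finally show ?thesis unfolding c_def .
qed

lemma cardX:
  assumes fin: "finite S"
  shows "card {x\<in>S \<rightarrow>\<^sub>E (UNIV::bool set). \<forall>l\<in>HS\<inter>S. x l = y l} = 2 ^ card (S - HS)"
proof -
  have eq: "{x\<in>S \<rightarrow>\<^sub>E (UNIV::bool set). \<forall>l\<in>HS\<inter>S. x l = y l}
      = PiE S (\<lambda>l. if l \<in> HS then {y l} else UNIV)"
    by (auto simp: PiE_def Pi_def split: if_splits)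
  have "card (PiE S (\<lambda>l. if l \<in> HS then {y l} else (UNIV::bool set)))
      = (\<Prod>l\<in>S. card (if l \<in> HS then {y l} else (UNIV::bool set)))"
    by (rule card_PiE[OF fin])
  also have "\<dots> = (\<Prod>l\<in>S. if l \<notin> HS then 2 else 1)"
    by (rule prod.cong) auto
  also have "\<dots> = (\<Prod>l\<in>{l\<in>S. l \<notin> HS}. 2)"
    by (rule prod.inter_filter[OF fin, symmetric])
  also have "{l\<in>S. l \<notin> HS} = S - HS" by auto
  finally show ?thesis using eq by simp
qed

lemma count_formula:
  fixes S HS :: "nat set" and B :: "nat \<Rightarrow> nat \<Rightarrow> bool" and v :: "nat \<Rightarrow> bool" and R :: nat
  assumes fin: "finite S"
    and K: "\<forall>u\<in>{..<R} \<rightarrow>\<^sub>E (UNIV::bool set). (\<exists>j<R. u j) \<longrightarrow>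
              (\<exists>l\<in>S-HS. odd (card {j\<in>{..<R}. u j \<and> B j l}))"
  shows "real (card {x\<in>S \<rightarrow>\<^sub>E (UNIV::bool set). (\<forall>l\<in>HS\<inter>S. x l = y l) \<and>
            (\<forall>j<R. odd (card {l\<in>S. B j l \<and> x l}) = v j)}) * 2 ^ R = 2 ^ card (S - HS)"
proof -
  define X where "X = {x\<in>S \<rightarrow>\<^sub>E (UNIV::bool set). \<forall>l\<in>HS\<inter>S. x l = y l}"
  define sat where "sat x = (\<forall>j<R. odd (card {l\<in>S. B j l \<and> x l}) = v j)" for x
  define U where "U = {..<R} \<rightarrow>\<^sub>E (UNIV::bool set)"
  define u0 where "u0 = (\<lambda>j::nat. if j < R then False else undefined)"
  define trm where "trm u x = (-1::real) ^ card {j\<in>{..<R}. u j \<and> (odd (card {l\<in>S. B j l \<and> x l}) \<noteq> v j)}" for u x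
  have finX: "finite X" unfolding X_def using fin by (intro finite_subset[OF _ finite_PiE[OF fin, of "\<lambda>_. UNIV::bool set"]]) auto
  have finU: "finite U" unfolding U_def by (auto intro: finite_PiE)
  have X2: "X = {x\<in>S \<rightarrow>\<^sub>E (UNIV::bool set). \<forall>l\<in>S-(S-HS). x l = y l}" unfolding X_def by auto
  have "real (card {x\<in>X. sat x}) * 2 ^ R = (\<Sum>x\<in>X. if sat x then 2 ^ R else 0)"
    using finX by (simp add: sum.If_cases Int_def)
  also have "\<dots> = (\<Sum>x\<in>X. \<Sum>u\<in>U. trm u x)"
  proof (rule sum.cong)
    fix x
    have "(\<Sum>u\<in>U. trm u x) = (if \<forall>j\<in>{..<R}. \<not> (odd (card {l\<in>S. B j l \<and> x l}) \<noteq> v j) then 2 ^ card {..<R} else 0)"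
      unfolding U_def trm_def by (rule char_indicator) simp
    then show "(if sat x then 2 ^ R else 0) = (\<Sum>u\<in>U. trm u x)" unfolding sat_def by auto
  qed simp
  also have "\<dots> = (\<Sum>u\<in>U. \<Sum>x\<in>X. trm u x)" by (rule sum.swap)
  also have "\<dots> = (\<Sum>u\<in>U. if u = u0 then 2 ^ card (S - HS) else 0)"
  proof (rule sum.cong)
    fix u assume uU: "u \<in> U"
    have "(\<Sum>x\<in>X. trm u x) = (\<Sum>x\<in>X. (-1) ^ card {j\<in>{..<R}. u j \<and> v j} *
        (-1) ^ card {l\<in>S. odd (card {j\<in>{..<R}. u j \<and> B j l}) \<and> x l})"
      unfolding trm_def by (rule sum.cong) (rule refl, rule parity_identity[OF fin])
    also have "\<dots> = (-1) ^ card {j\<in>{..<R}. u j \<and> v j} *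
        (\<Sum>x\<in>X. (-1) ^ card {l\<in>S. odd (card {j\<in>{..<R}. u j \<and> B j l}) \<and> x l})"
      by (simp add: sum_distrib_left)
    finally have eq: "(\<Sum>x\<in>X. trm u x) = \<dots>" .
    show "(\<Sum>x\<in>X. trm u x) = (if u = u0 then 2 ^ card (S - HS) else 0)"
    proof (cases "u = u0")
      case True
      have e1: "\<And>x. {l\<in>S. odd (card {j\<in>{..<R}. u j \<and> B j l}) \<and> x l} = {}"
        using True by (auto simp: u0_def)
      have e2: "{j\<in>{..<R}. u j \<and> v j} = {}" using True by (auto simp: u0_def)
      have "(\<Sum>x\<in>X. trm u x) = real (card X)" using eq[unfolded e1 e2] by simp
      also have "\<dots> = 2 ^ card (S - HS)" unfolding X_def using cardX[OF fin] by simp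
      finally show ?thesis using True by simp
    next
      case False
      have "\<exists>j<R. u j"
      proof (rule ccontr)
        assume "\<not> (\<exists>j<R. u j)"
        then have "u = u0" using uU unfolding U_def u0_def by (auto simp: PiE_def extensional_def)
        then show False using False by simp
      qed
      then obtain l0 where l0: "l0 \<in> S - HS" "odd (card {j\<in>{..<R}. u j \<and> B j l0})"
        using K uU unfolding U_def by blast
      have "(\<Sum>x\<in>X. (-1::real) ^ card {l\<in>S. odd (card {j\<in>{..<R}. u j \<and> B j l}) \<and> x l}) = 0"
        unfolding X2 by (rule char_zero[OF fin _ l0(1)]) (use l0 in auto)
      then show ?thesis using eq False by simp
    qed
  qed simp
  also have "\<dots> = 2 ^ card (S - HS)"
  proof -
    have "u0 \<in> U" unfolding U_def u0_def by auto
    then show ?thesis using finU by (simp add: sum.delta')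
  qed
  finally show ?thesis unfolding X_def sat_def by simp
qed



lemma card_split_one:
  assumes "j0 < (R::nat)"
  shows "card {j\<in>{..<R}. P j} = card {j\<in>{..<R}-{j0}. P j} + (if P j0 then 1 else 0)"
proof (cases "P j0")
  case True
  have "{j\<in>{..<R}. P j} = insert j0 {j\<in>{..<R}-{j0}. P j}" using True assms by auto
  then show ?thesis using True by simp
next
  case False
  then have "{j\<in>{..<R}. P j} = {j\<in>{..<R}-{j0}. P j}" by auto
  then show ?thesis using False by simp
qed

lemma good_matrix_count:
  fixes F :: "nat set"
  assumes fin: "finite F" and j0: "j0 < R" "u j0"
  shows "card {M \<in> Pow ({..<R} \<times> F). \<forall>l\<in>F. even (card {j\<in>{..<R}. u j \<and> (j,l)\<in>M})}
         \<le> 2 ^ ((R-1) * card F)"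
proof -
  define G where "G = {M \<in> Pow ({..<R} \<times> F). \<forall>l\<in>F. even (card {j\<in>{..<R}. u j \<and> (j,l)\<in>M})}"
  define \<rho> where "\<rho> M = M \<inter> (({..<R}-{j0}) \<times> F)" for M :: "(nat\<times>nat) set"
  have inj: "inj_on \<rho> G"
  proof (rule inj_onI)
    fix M1 M2 assume M1: "M1 \<in> G" and M2: "M2 \<in> G" and eq: "\<rho> M1 = \<rho> M2"
    have j0l: "(j0,l) \<in> M1 \<longleftrightarrow> (j0,l) \<in> M2" if l: "l \<in> F" for l
    proof -
      have same: "{j\<in>{..<R}-{j0}. u j \<and> (j,l)\<in>M1} = {j\<in>{..<R}-{j0}. u j \<and> (j,l)\<in>M2}"
      proof -
        have "\<And>j. j \<in> {..<R}-{j0} \<Longrightarrow> (j,l)\<in>M1 \<longleftrightarrow> (j,l)\<in>M2"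
          using eq l unfolding \<rho>_def by blast
        then show ?thesis by auto
      qed
      have e1: "even (card {j\<in>{..<R}. u j \<and> (j,l)\<in>M1})" using M1 l unfolding G_def by auto
      have e2: "even (card {j\<in>{..<R}. u j \<and> (j,l)\<in>M2})" using M2 l unfolding G_def by auto
      show ?thesis
        using e1 e2 card_split_one[OF j0(1), of "\<lambda>j. u j \<and> (j,l)\<in>M1"]
          card_split_one[OF j0(1), of "\<lambda>j. u j \<and> (j,l)\<in>M2"] same j0(2)
        by (auto split: if_splits)
    qed
    show "M1 = M2"
    proof (rule set_eqI)
      fix p :: "nat \<times> nat"
      obtain j l where p: "p = (j,l)" by fastforce
      show "p \<in> M1 \<longleftrightarrow> p \<in> M2"
      proof (cases "j = j0")
        case True
        show ?thesis
        proof (cases "l \<in> F")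
          case True
          then show ?thesis using j0l p \<open>j = j0\<close> by simp
        next
          case False
          then show ?thesis using M1 M2 p unfolding G_def by auto
        qed
      next
        case False
        then show ?thesis using eq M1 M2 p unfolding \<rho>_def G_def by blast
      qed
    qed
  qed
  have sub: "\<rho> ` G \<subseteq> Pow (({..<R}-{j0}) \<times> F)" unfolding \<rho>_def by auto
  have "card G = card (\<rho> ` G)" using inj by (simp add: card_image)
  also have "\<dots> \<le> card (Pow (({..<R}-{j0}) \<times> F))"
    by (rule card_mono) (use fin sub in auto)
  also have "\<dots> = 2 ^ ((R-1) * card F)"
    using fin j0 by (simp add: card_Pow card_cartesian_product)
  finally show ?thesis unfolding G_def .
qed

lemma bad_matrix_count:
  fixes F :: "nat set"
  assumes fin: "finite F"
  shows "card {M \<in> Pow ({..<R} \<times> F). \<exists>u\<in>{..<R} \<rightarrow>\<^sub>E (UNIV::bool set). (\<exists>j<R. u j) \<and>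
            (\<forall>l\<in>F. even (card {j\<in>{..<R}. u j \<and> (j,l)\<in>M}))}
         \<le> 2 ^ R * 2 ^ ((R-1) * card F)"
proof -
  define U where "U = {..<R} \<rightarrow>\<^sub>E (UNIV::bool set)"
  define G where "G u = {M \<in> Pow ({..<R} \<times> F). \<forall>l\<in>F. even (card {j\<in>{..<R}. u j \<and> (j,l)\<in>M})}" for u
  have finU: "finite U" unfolding U_def by (auto intro: finite_PiE)
  have "{M \<in> Pow ({..<R} \<times> F). \<exists>u\<in>U. (\<exists>j<R. u j) \<and>
            (\<forall>l\<in>F. even (card {j\<in>{..<R}. u j \<and> (j,l)\<in>M}))} \<subseteq> (\<Union>u\<in>{u\<in>U. \<exists>j<R. u j}. G u)"
    unfolding G_def by auto
  then have "card {M \<in> Pow ({..<R} \<times> F). \<exists>u\<in>U. (\<exists>j<R. u j) \<and>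
            (\<forall>l\<in>F. even (card {j\<in>{..<R}. u j \<and> (j,l)\<in>M}))} \<le> card (\<Union>u\<in>{u\<in>U. \<exists>j<R. u j}. G u)"
    by (rule card_mono[rotated]) (use finU fin in \<open>auto simp: G_def\<close>)
  also have "\<dots> \<le> (\<Sum>u\<in>{u\<in>U. \<exists>j<R. u j}. card (G u))"
    by (rule card_UN_le) (use finU in auto)
  also have "\<dots> \<le> (\<Sum>u\<in>{u\<in>U. \<exists>j<R. u j}. 2 ^ ((R-1) * card F))"
    by (rule sum_mono) (use good_matrix_count[OF fin] in \<open>auto simp: G_def\<close>)
  also have "\<dots> \<le> card U * 2 ^ ((R-1) * card F)"
    using card_mono[OF finU, of "{u\<in>U. \<exists>j<R. u j}"] by simp
  also have "card U = 2 ^ R" unfolding U_def by (simp add: card_PiE)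
  finally show ?thesis unfolding U_def .
qed



lemma choose_step: "(n choose Suc k) * Suc k = (n choose k) * (n - k)"
  by (metis binomial_absorb_comp binomial_absorption mult.commute)

lemma count_supersets:
  assumes fin: "finite U" and T: "T \<subseteq> U" "card T = t" and tm: "t \<le> m"
  shows "card {Q. Q \<subseteq> U \<and> card Q = m \<and> T \<subseteq> Q} = (card U - t) choose (m - t)"
proof -
  have finT: "finite T" using T fin finite_subset by auto
  have "bij_betw (\<lambda>Q. Q - T) {Q. Q \<subseteq> U \<and> card Q = m \<and> T \<subseteq> Q} {Q'. Q' \<subseteq> U - T \<and> card Q' = m - t}"
  proof (rule bij_betw_byWitness[where f'="\<lambda>Q'. Q' \<union> T"])
    show "\<forall>Q\<in>{Q. Q \<subseteq> U \<and> card Q = m \<and> T \<subseteq> Q}. Q - T \<union> T = Q" by auto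
    show "\<forall>Q'\<in>{Q'. Q' \<subseteq> U - T \<and> card Q' = m - t}. Q' \<union> T - T = Q'" by auto
    show "(\<lambda>Q. Q - T) ` {Q. Q \<subseteq> U \<and> card Q = m \<and> T \<subseteq> Q} \<subseteq> {Q'. Q' \<subseteq> U - T \<and> card Q' = m - t}"
    proof (rule image_subsetI)
      fix Q assume "Q \<in> {Q. Q \<subseteq> U \<and> card Q = m \<and> T \<subseteq> Q}"
      then have Q: "Q \<subseteq> U" "T \<subseteq> Q" "card Q = m" by auto
      then show "Q - T \<in> {Q'. Q' \<subseteq> U - T \<and> card Q' = m - t}"
        using finT T by (auto simp: card_Diff_subset)
    qed
    show "(\<lambda>Q'. Q' \<union> T) ` {Q'. Q' \<subseteq> U - T \<and> card Q' = m - t} \<subseteq> {Q. Q \<subseteq> U \<and> card Q = m \<and> T \<subseteq> Q}"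
    proof (rule image_subsetI)
      fix Q' assume "Q' \<in> {Q'. Q' \<subseteq> U - T \<and> card Q' = m - t}"
      then have Q': "Q' \<subseteq> U - T" "card Q' = m - t" by auto
      have "finite Q'" using Q' fin finite_subset by blast
      then have "card (Q' \<union> T) = card Q' + card T"
        using Q' finT by (intro card_Un_disjoint) auto
      then show "Q' \<union> T \<in> {Q. Q \<subseteq> U \<and> card Q = m \<and> T \<subseteq> Q}"
        using Q' T tm by auto
    qed
  qed
  then have "card {Q. Q \<subseteq> U \<and> card Q = m \<and> T \<subseteq> Q} = card {Q'. Q' \<subseteq> U - T \<and> card Q' = m - t}"
    by (rule bij_betw_same_card)
  also have "\<dots> = card (U - T) choose (m - t)" by (rule n_subsets) (use fin in auto)
  also have "card (U - T) = card U - t" using T finT by (simp add: card_Diff_subset)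
  finally show ?thesis .
qed

lemma double_count:
  assumes fin: "finite U" and MU: "M \<subseteq> U" and tm: "t \<le> m"
  shows "(\<Sum>Q\<in>{Q. Q \<subseteq> U \<and> card Q = m}. card (Q \<inter> M) choose t)
         = (card M choose t) * ((card U - t) choose (m - t))"
proof -
  define QS where "QS = {Q. Q \<subseteq> U \<and> card Q = m}"
  define TS where "TS = {T. T \<subseteq> M \<and> card T = t}"
  have finQS: "finite QS" unfolding QS_def using fin by auto
  have finM: "finite M" using MU fin finite_subset by auto
  have finTS: "finite TS" unfolding TS_def using finM by auto
  have "(\<Sum>Q\<in>QS. card (Q \<inter> M) choose t) = (\<Sum>Q\<in>QS. \<Sum>T\<in>{T\<in>TS. T \<subseteq> Q}. 1)"
  proof (rule sum.cong)
    fix Q assume "Q \<in> QS"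
    have "card (Q \<inter> M) choose t = card {T. T \<subseteq> Q \<inter> M \<and> card T = t}"
      by (rule n_subsets[symmetric]) (use finM in auto)
    also have "{T. T \<subseteq> Q \<inter> M \<and> card T = t} = {T\<in>TS. T \<subseteq> Q}" unfolding TS_def by auto
    finally show "card (Q \<inter> M) choose t = (\<Sum>T\<in>{T\<in>TS. T \<subseteq> Q}. 1)" by simp
  qed simp
  also have "\<dots> = (\<Sum>T\<in>TS. \<Sum>Q\<in>{Q\<in>QS. T \<subseteq> Q}. 1)"
    by (rule sum.swap_restrict[OF finQS finTS])
  also have "\<dots> = (\<Sum>T\<in>TS. (card U - t) choose (m - t))"
  proof (rule sum.cong)
    fix T assume T: "T \<in> TS"
    have "{Q\<in>QS. T \<subseteq> Q} = {Q. Q \<subseteq> U \<and> card Q = m \<and> T \<subseteq> Q}" unfolding QS_def by auto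
    then show "(\<Sum>Q\<in>{Q\<in>QS. T \<subseteq> Q}. 1) = (card U - t) choose (m - t)"
      using count_supersets[OF fin _ _ tm, of T] T MU unfolding TS_def by auto
  qed simp
  also have "\<dots> = card TS * ((card U - t) choose (m - t))" by simp
  also have "card TS = card M choose t" unfolding TS_def by (rule n_subsets[OF finM])
  finally show ?thesis unfolding QS_def .
qed

lemma ratio_key:
  fixes u m x0 D t :: real
  assumes "0 \<le> t" "t + 1 \<le> m" "t \<le> u" "u \<le> 2*m" "u + D \<le> 2*x0" "2*(t+1) \<le> D"
  shows "(u-t)*(m-t)*(4*m+D) \<le> (x0-t)*(2*m-t)*(4*m)"
proof -
  have a: "(u-t)*(4*m+D) \<le> 8*m*(x0-t)"
  proof -
    have "t \<le> D/2" using assms(6) by (simp add: field_simps)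
    then have "2*(x0-t) \<ge> (u-t) + D/2" using assms(5) by (simp add: field_simps)
    then have "4*m*(2*(x0-t)) \<ge> 4*m*((u-t) + D/2)" using assms by (intro mult_left_mono) auto
    moreover have "(u-t)*D \<le> 2*m*D" using assms by (intro mult_right_mono) auto
    ultimately show ?thesis by (simp add: algebra_simps)
  qed
  have b: "2*(m-t) \<le> 2*m - t" using assms by auto
  have "(u-t)*(m-t)*(4*m+D) = ((u-t)*(4*m+D))*(m-t)" by (simp add: algebra_simps)
  also have "\<dots> \<le> (8*m*(x0-t))*(m-t)" using a assms by (intro mult_right_mono) auto
  also have "\<dots> = (4*m*(x0-t))*(2*(m-t))" by (simp add: algebra_simps)
  also have "\<dots> \<le> (4*m*(x0-t))*(2*m-t)" using b assms by (intro mult_left_mono) auto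
  finally show ?thesis by (simp add: algebra_simps)
qed

lemma ratio_bound:
  fixes u m x0 D :: nat
  assumes "u \<le> 2*m" "u + D \<le> 2*x0"
  shows "2*t \<le> D \<Longrightarrow> t \<le> m \<Longrightarrow>
    real (u choose t) * real ((2*m - t) choose (m - t)) * (4*real m+real D)^t
      \<le> real (x0 choose t) * real ((2*m) choose m) * (4*real m)^t"
proof (induction t)
  case 0
  then show ?case by simp
next
  case (Suc t)
  have IH: "real (u choose t) * real ((2*m - t) choose (m - t)) * (4*real m+real D)^t
      \<le> real (x0 choose t) * real ((2*m) choose m) * (4*real m)^t" using Suc by auto
  have tx0: "t < x0" using Suc.prems assms by presburger
  have e1: "real (u choose Suc t) * real (Suc t) = real (u choose t) * real (u - t)"
    using choose_step[of u t] by (metis of_nat_mult)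
  have e3: "real (x0 choose Suc t) * real (Suc t) = real (x0 choose t) * (real x0 - real t)"
    using choose_step[of x0 t] tx0 by (metis of_nat_diff less_imp_le of_nat_mult)
  have e2: "real ((2*m - Suc t) choose (m - Suc t)) * (2*real m - real t) = real ((2*m - t) choose (m - t)) * (real m - real t)"
  proof -
    have "Suc (m - Suc t) * ((2*m - t) choose Suc (m - Suc t)) = (2*m - t) * ((2*m - t) - 1 choose (m - Suc t))"
      by (rule binomial_absorption)
    moreover have "Suc (m - Suc t) = m - t" using Suc.prems by auto
    moreover have "(2*m - t) - 1 = 2*m - Suc t" by auto
    ultimately have "(m - t) * ((2*m - t) choose (m - t)) = (2*m - t) * ((2*m - Suc t) choose (m - Suc t))" by simp
    then have "real (m - t) * real ((2*m - t) choose (m - t)) = real (2*m - t) * real ((2*m - Suc t) choose (m - Suc t))"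
      by (metis of_nat_mult)
    moreover have "real (m - t) = real m - real t" "real (2*m - t) = 2*real m - real t" using Suc.prems by auto
    ultimately show ?thesis by (simp add: algebra_simps)
  qed
  define A where "A = real (u choose t)"
  define Bb where "Bb = real ((2*m - t) choose (m - t))"
  define Cc where "Cc = real (x0 choose t)"
  define C0 where "C0 = real ((2*m) choose m)"
  have pos1: "real (Suc t) * (2*real m - real t) > 0" using Suc.prems by auto
  have key: "real (u - t) * (real m - real t) * (4*real m+real D) \<le> (real x0 - real t) * (2*real m - real t) * (4*real m)"
  proof (cases "t \<le> u")
    case True
    then have "real (u - t) = real u - real t" by simp
    then show ?thesis using ratio_key[of "real t" "real m" "real u" "real D" "real x0"] Suc.prems assms True
      by simp
  next
    case False
    then have "u - t = 0" by simp
    then show ?thesis using Suc.prems tx0 by simp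
  qed
  define P where "P = 4*real m+real D"
  define Q where "Q = 4*real m"
  define Bn where "Bn = real ((2*m - Suc t) choose (m - Suc t))"
  have "(real (u choose Suc t) * Bn * P^Suc t) * (real (Suc t) * (2*real m - real t))
      = (real (u choose Suc t) * real (Suc t)) * (Bn * (2*real m - real t)) * P^t * P"
    by (simp add: power_Suc mult_ac)
  also have "\<dots> = (A * real (u - t)) * (Bb * (real m - real t)) * P^t * P"
    using e1 e2 unfolding A_def Bb_def Bn_def by simp
  also have "\<dots> = (A * Bb * P^t) * (real (u - t) * (real m - real t) * P)"
    by (simp add: mult_ac)
  also have "\<dots> \<le> (Cc * C0 * Q^t) * ((real x0 - real t) * (2*real m - real t) * Q)"
  proof (rule mult_mono)
    show "A * Bb * P^t \<le> Cc * C0 * Q^t" using IH unfolding A_def Bb_def Cc_def C0_def P_def Q_def by simp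
    show "real (u - t) * (real m - real t) * P \<le> (real x0 - real t) * (2*real m - real t) * Q"
      using key unfolding P_def Q_def .
    show "0 \<le> real (u - t) * (real m - real t) * P"
      using Suc.prems unfolding P_def by (intro mult_nonneg_nonneg) auto
  qed (use Suc.prems tx0 in \<open>auto simp: Cc_def C0_def Q_def\<close>)
  also have "\<dots> = (Cc * (real x0 - real t)) * C0 * Q^t * Q * (2*real m - real t)"
    by (simp add: mult_ac)
  also have "\<dots> = (real (x0 choose Suc t) * real (Suc t)) * C0 * Q^t * Q * (2*real m - real t)"
    using e3 unfolding Cc_def by simp
  also have "\<dots> = (real (x0 choose Suc t) * C0 * Q^Suc t) * (real (Suc t) * (2*real m - real t))"
    by (simp add: power_Suc mult_ac)
  finally have "(real (u choose Suc t) * Bn * P^Suc t) * (real (Suc t) * (2*real m - real t))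
     \<le> (real (x0 choose Suc t) * C0 * Q^Suc t) * (real (Suc t) * (2*real m - real t))" .
  then show ?case using pos1 unfolding Bn_def C0_def P_def Q_def by (simp only: mult_le_cancel_right_pos)
qed
lemma tail_lemma:
  fixes U M :: "'a set" and m x0 D t :: nat
  assumes fin: "finite U" and cU: "card U = 2*m" and MU: "M \<subseteq> U"
    and x0: "card M + D \<le> 2*x0" and tD: "2*t \<le> D" and tm: "t \<le> m" and m0: "0 < m"
  shows "real (card {Q. Q \<subseteq> U \<and> card Q = m \<and> x0 \<le> card (Q \<inter> M)})
          \<le> real ((2*m) choose m) * (4*real m / (4*real m + real D))^t"
proof -
  define QS where "QS = {Q. Q \<subseteq> U \<and> card Q = m}"
  define bad where "bad = {Q. Q \<subseteq> U \<and> card Q = m \<and> x0 \<le> card (Q \<inter> M)}"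
  have finQS: "finite QS" unfolding QS_def using fin by auto
  have badQS: "bad \<subseteq> QS" unfolding bad_def QS_def by auto
  have uM: "card M \<le> 2*m" using card_mono[OF fin MU] cU by simp
  have "card bad * (x0 choose t) = (\<Sum>Q\<in>bad. x0 choose t)" by simp
  also have "\<dots> \<le> (\<Sum>Q\<in>bad. card (Q \<inter> M) choose t)"
    by (rule sum_mono) (auto simp: bad_def intro: binomial_right_mono)
  also have "\<dots> \<le> (\<Sum>Q\<in>QS. card (Q \<inter> M) choose t)"
    by (rule sum_mono2[OF finQS badQS]) simp
  also have "\<dots> = (card M choose t) * ((2*m - t) choose (m - t))"
    unfolding QS_def using double_count[OF fin MU tm] cU by simp
  finally have c1: "real (card bad) * real (x0 choose t) \<le> real (card M choose t) * real ((2*m - t) choose (m - t))"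
    by (metis of_nat_le_iff of_nat_mult)
  have c2: "real (card M choose t) * real ((2*m - t) choose (m - t)) * (4*real m+real D)^t
      \<le> real (x0 choose t) * real ((2*m) choose m) * (4*real m)^t"
    by (rule ratio_bound[OF uM x0 tD tm])
  have tx0: "t \<le> x0" using x0 tD by linarith
  have Cpos: "real (x0 choose t) > 0" using tx0 by simp
  have Ppos: "(4*real m+real D)^t > 0" using m0 by simp
  have "real (card bad) * real (x0 choose t) * (4*real m+real D)^t
      \<le> real (x0 choose t) * real ((2*m) choose m) * (4*real m)^t"
    using c1 c2 Ppos by (meson dual_order.trans less_imp_le mult_right_mono)
  then have "real (card bad) * (4*real m+real D)^t \<le> real ((2*m) choose m) * (4*real m)^t"
    using Cpos by (simp add: mult_ac)
  then have "real (card bad) \<le> real ((2*m) choose m) * (4*real m)^t / (4*real m+real D)^t"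
    using Ppos by (simp add: field_simps)
  then show ?thesis unfolding bad_def by (simp add: power_divide)
qed



lemma fiber_bound:
  assumes fin: "finite \<Omega>"
    and fib: "\<And>\<omega>. \<omega> \<in> \<Omega> \<Longrightarrow> real (card (E \<inter> {\<omega>'\<in>\<Omega>. g \<omega>' = g \<omega>})) \<le> p * real (card {\<omega>'\<in>\<Omega>. g \<omega>' = g \<omega>})"
  shows "real (card (E \<inter> \<Omega>)) \<le> p * real (card \<Omega>)"
proof -
  have c1: "card (E \<inter> \<Omega>) = (\<Sum>y\<in>g ` \<Omega>. card (E \<inter> {\<omega>'\<in>\<Omega>. g \<omega>' = y}))"
  proof -
    have "card (E \<inter> \<Omega>) = (\<Sum>\<omega>\<in>\<Omega>. if \<omega> \<in> E then 1 else 0)"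
      using fin by (simp add: sum.If_cases Int_commute)
    also have "\<dots> = (\<Sum>y\<in>g ` \<Omega>. \<Sum>\<omega>\<in>{\<omega>'\<in>\<Omega>. g \<omega>' = y}. if \<omega> \<in> E then 1 else 0)"
      by (rule sum.image_gen[OF fin])
    also have "\<dots> = (\<Sum>y\<in>g ` \<Omega>. card (E \<inter> {\<omega>'\<in>\<Omega>. g \<omega>' = y}))"
    proof (rule sum.cong)
      fix y
      have "finite {\<omega>'\<in>\<Omega>. g \<omega>' = y}" using fin by auto
      then show "(\<Sum>\<omega>\<in>{\<omega>'\<in>\<Omega>. g \<omega>' = y}. if \<omega> \<in> E then 1 else 0) = card (E \<inter> {\<omega>'\<in>\<Omega>. g \<omega>' = y})"
        by (simp add: sum.If_cases Int_commute)
    qed simp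
    finally show ?thesis .
  qed
  have c2: "card \<Omega> = (\<Sum>y\<in>g ` \<Omega>. card {\<omega>'\<in>\<Omega>. g \<omega>' = y})"
  proof -
    have "card \<Omega> = (\<Sum>\<omega>\<in>\<Omega>. 1)" by simp
    also have "\<dots> = (\<Sum>y\<in>g ` \<Omega>. \<Sum>\<omega>\<in>{\<omega>'\<in>\<Omega>. g \<omega>' = y}. 1)"
      by (rule sum.image_gen[OF fin])
    finally show ?thesis by simp
  qed
  have "real (card (E \<inter> \<Omega>)) = (\<Sum>y\<in>g ` \<Omega>. real (card (E \<inter> {\<omega>'\<in>\<Omega>. g \<omega>' = y})))"
    using c1 by simp
  also have "\<dots> \<le> (\<Sum>y\<in>g ` \<Omega>. p * real (card {\<omega>'\<in>\<Omega>. g \<omega>' = y}))"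
  proof (rule sum_mono)
    fix y assume "y \<in> g ` \<Omega>"
    then obtain \<omega> where "\<omega> \<in> \<Omega>" "y = g \<omega>" by auto
    then show "real (card (E \<inter> {\<omega>'\<in>\<Omega>. g \<omega>' = y})) \<le> p * real (card {\<omega>'\<in>\<Omega>. g \<omega>' = y})"
      using fib by simp
  qed
  also have "\<dots> = p * real (card \<Omega>)" using c2 by (simp add: sum_distrib_left)
  finally show ?thesis .
qed

lemma configs_iff:
  "(S,B,v) \<in> configs n r m a \<longleftrightarrow> S \<in> block_partitions n r m \<and>
     (\<forall>i j l. B i j l \<longrightarrow> i\<in>{1..r} \<and> j < m - a i \<and> l \<in> S i) \<and>
     (\<forall>i j. v i j \<longrightarrow> i\<in>{1..r} \<and> j < m - a i)"
  by (simp add: configs_def cS_def cB_def cv_def)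

lemma finite_block_partitions: "finite (block_partitions n r m)"
proof -
  have inj: "inj_on (\<lambda>S. restrict S {1..r}) (block_partitions n r m)"
  proof (rule inj_onI)
    fix S S' assume S: "S \<in> block_partitions n r m" and S': "S' \<in> block_partitions n r m"
      and eq: "restrict S {1..r} = restrict S' {1..r}"
    show "S = S'"
    proof
      fix i show "S i = S' i"
      proof (cases "i \<in> {1..r}")
        case True then show ?thesis using fun_cong[OF eq, of i] by simp
      next
        case False then show ?thesis using S S' unfolding block_partitions_def by auto
      qed
    qed
  qed
  have "(\<lambda>S. restrict S {1..r}) ` block_partitions n r m \<subseteq> PiE {1..r} (\<lambda>_. Pow {1..n})"
    unfolding block_partitions_def by auto
  then have "finite ((\<lambda>S. restrict S {1..r}) ` block_partitions n r m)"
    by (rule finite_subset) (auto intro!: finite_PiE)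
  then show ?thesis using finite_imageD inj by blast
qed

lemma finite_supp_funs3:
  assumes "finite D"
  shows "finite {B :: nat \<Rightarrow> nat \<Rightarrow> nat \<Rightarrow> bool. \<forall>i j l. B i j l \<longrightarrow> (i,j,l) \<in> D}"
proof -
  let ?A = "{B :: nat \<Rightarrow> nat \<Rightarrow> nat \<Rightarrow> bool. \<forall>i j l. B i j l \<longrightarrow> (i,j,l) \<in> D}"
  have inj: "inj_on (\<lambda>B. {(i,j,l). B i j l}) ?A"
    by (rule inj_onI) (auto simp: fun_eq_iff set_eq_iff)
  have "(\<lambda>B. {(i,j,l). B i j l}) ` ?A \<subseteq> Pow D" by auto
  then have "finite ((\<lambda>B. {(i,j,l). B i j l}) ` ?A)" using assms finite_subset by blast
  then show ?thesis using finite_imageD inj by blast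
qed

lemma finite_supp_funs2:
  assumes "finite D"
  shows "finite {v :: nat \<Rightarrow> nat \<Rightarrow> bool. \<forall>i j. v i j \<longrightarrow> (i,j) \<in> D}"
proof -
  let ?A = "{v :: nat \<Rightarrow> nat \<Rightarrow> bool. \<forall>i j. v i j \<longrightarrow> (i,j) \<in> D}"
  have inj: "inj_on (\<lambda>v. {(i,j). v i j}) ?A"
    by (rule inj_onI) (auto simp: fun_eq_iff set_eq_iff)
  have "(\<lambda>v. {(i,j). v i j}) ` ?A \<subseteq> Pow D" by auto
  then have "finite ((\<lambda>v. {(i,j). v i j}) ` ?A)" using assms finite_subset by blast
  then show ?thesis using finite_imageD inj by blast
qed

lemma finite_configs: "finite (configs n r m a)"
proof -
  have "configs n r m a \<subseteq> block_partitions n r m \<times>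
     {B. \<forall>i j l. B i j l \<longrightarrow> (i,j,l) \<in> {1..r} \<times> {..<m} \<times> {1..n}} \<times>
     {v. \<forall>i j. v i j \<longrightarrow> (i,j) \<in> {1..r} \<times> {..<m}}"
  proof (rule subsetI)
    fix \<omega> assume c0: "\<omega> \<in> configs n r m a"
    obtain S B v where om: "\<omega> = (S,B,v)" by (cases \<omega>) auto
    have c: "(S,B,v) \<in> configs n r m a" using c0 om by simp
    then have S: "S \<in> block_partitions n r m" by (simp add: configs_iff)
    have "\<forall>i j l. B i j l \<longrightarrow> (i,j,l) \<in> {1..r} \<times> {..<m} \<times> {1..n}"
      using c S unfolding configs_iff block_partitions_def by fastforce
    moreover have "\<forall>i j. v i j \<longrightarrow> (i,j) \<in> {1..r} \<times> {..<m}"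
      using c unfolding configs_iff by fastforce
    ultimately show "\<omega> \<in> block_partitions n r m \<times>
     {B. \<forall>i j l. B i j l \<longrightarrow> (i,j,l) \<in> {1..r} \<times> {..<m} \<times> {1..n}} \<times>
     {v. \<forall>i j. v i j \<longrightarrow> (i,j) \<in> {1..r} \<times> {..<m}}" using S om by simp
  qed
  moreover have "finite (block_partitions n r m \<times>
     {B. \<forall>i j l. B i j l \<longrightarrow> (i,j,l) \<in> {1..r} \<times> {..<m} \<times> {1..n}} \<times>
     {v. \<forall>i j. v i j \<longrightarrow> (i,j) \<in> {1..r} \<times> {..<m}})"
    by (intro finite_cartesian_product finite_block_partitions finite_supp_funs3 finite_supp_funs2) auto
  ultimately show ?thesis by (rule finite_subset)
qed



locale hsetup =
  fixes n r m :: nat and a :: "nat \<Rightarrow> nat" and k :: nat and \<omega>0 :: config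
    and HS :: "nat set" and y :: "nat \<Rightarrow> bool" and T :: nat
  assumes k1: "1 \<le> k" and kr: "k < r" and om0: "\<omega>0 \<in> configs n r m a" and HS: "HS \<subseteq> {1..n}"
    and am: "\<forall>i\<in>{1..r}. a i < m"
begin

abbreviation \<Omega> where "\<Omega> \<equiv> configs_given n r m a k \<omega>0"
definition hh where "hh \<omega> i = card (HS \<inter> cS \<omega> i)"
definition mu where "mu \<omega> i = muiH m a \<omega> i HS y"

lemma trip: "\<omega> = (cS \<omega>, cB \<omega>, cv \<omega>)"
  by (simp add: cS_def cB_def cv_def)

lemma Omega_iff: "(S,B,v) \<in> \<Omega> \<longleftrightarrow> (S,B,v) \<in> configs n r m a \<and>
   (\<forall>i\<in>{1..<k}. S i = cS \<omega>0 i \<and> B i = cB \<omega>0 i \<and> v i = cv \<omega>0 i)"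
  by (simp add: configs_given_def cS_def cB_def cv_def)

lemma finOmega: "finite \<Omega>"
  by (rule finite_subset[OF _ finite_configs]) (auto simp: configs_given_def)

lemma om0_Omega: "\<omega>0 \<in> \<Omega>"
  using om0 by (simp add: configs_given_def)

lemma Omega_conf: "\<omega> \<in> \<Omega> \<Longrightarrow> \<omega> \<in> configs n r m a"
  by (simp add: configs_given_def)

lemma block_facts:
  assumes "\<omega> \<in> \<Omega>" "i \<in> {1..r}"
  shows "cS \<omega> i \<subseteq> {1..n}" "card (cS \<omega> i) = m" "finite (cS \<omega> i)"
proof -
  have "cS \<omega> \<in> block_partitions n r m" using assms(1) by (simp add: configs_given_def configs_def)
  then show "cS \<omega> i \<subseteq> {1..n}" "card (cS \<omega> i) = m" using assms(2) unfolding block_partitions_def by auto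
  then show "finite (cS \<omega> i)" using finite_subset by blast
qed

lemma mu_nonzero:
  assumes "mu \<omega> i \<noteq> 0"
  shows "\<exists>x. x \<in> cS \<omega> i \<rightarrow>\<^sub>E (UNIV::bool set) \<and> (\<forall>l\<in>HS \<inter> cS \<omega> i. x l = y l) \<and> block_sat m a \<omega> i x"
proof (rule ccontr)
  assume "\<not> ?thesis"
  then have e: "{x \<in> cS \<omega> i \<rightarrow>\<^sub>E (UNIV::bool set). (\<forall>l\<in>HS \<inter> cS \<omega> i. x l = y l) \<and> block_sat m a \<omega> i x} = {}"
    by auto
  have "mu \<omega> i = 0" unfolding mu_def muiH_def e by simp
  then show False using assms by simp
qed

lemma card_S_minus_HS:
  assumes "\<omega> \<in> \<Omega>" "i \<in> {1..r}"
  shows "card (cS \<omega> i - HS) = m - hh \<omega> i" "hh \<omega> i \<le> m"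
proof -
  have f: "finite (cS \<omega> i)" using block_facts[OF assms] by simp
  have "card (cS \<omega> i - HS) = card (cS \<omega> i) - card (cS \<omega> i \<inter> HS)"
    by (rule card_Diff_subset_Int) (use f in auto)
  then show "card (cS \<omega> i - HS) = m - hh \<omega> i"
    using block_facts[OF assms] by (simp add: hh_def Int_commute)
  show "hh \<omega> i \<le> m" unfolding hh_def using card_mono[OF f, of "HS \<inter> cS \<omega> i"] block_facts[OF assms] by auto
qed

lemma F1_bound:
  "real (card ({\<omega>. mu \<omega> k \<noteq> 0 \<and> a k + T \<le> hh \<omega> k} \<inter> \<Omega>)) \<le> (1 / 2^T) * real (card \<Omega>)"
proof (rule fiber_bound[OF finOmega, where g="\<lambda>\<omega>. (cS \<omega>, cB \<omega>, (cv \<omega>)(k := (\<lambda>_. False)))"])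
  fix \<omega> assume om: "\<omega> \<in> \<Omega>"
  obtain S B v where omd: "\<omega> = (S,B,v)" by (cases \<omega>) auto
  define E where "E = {\<omega>. mu \<omega> k \<noteq> 0 \<and> a k + T \<le> hh \<omega> k}"
  define fib where "fib = {\<omega>'\<in>\<Omega>. (cS \<omega>', cB \<omega>', (cv \<omega>')(k := (\<lambda>_. False))) = (cS \<omega>, cB \<omega>, (cv \<omega>)(k := (\<lambda>_. False)))}"
  define R where "R = m - a k"
  define par where "par \<omega>' = {j. cv \<omega>' k j}" for \<omega>' :: config
  have kr': "k \<in> {1..r}" using k1 kr by auto
  have finfib: "finite fib" unfolding fib_def using finOmega by auto
  have fibD: "cS \<omega>' = S \<and> cB \<omega>' = B \<and> (cv \<omega>')(k := (\<lambda>_. False)) = v(k := (\<lambda>_. False))" if "\<omega>' \<in> fib" for \<omega>'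
    using that unfolding fib_def omd by (simp add: cS_def cB_def cv_def)
  have inj: "inj_on par fib"
  proof (rule inj_onI)
    fix \<omega>1 \<omega>2 assume o1: "\<omega>1 \<in> fib" and o2: "\<omega>2 \<in> fib" and pe: "par \<omega>1 = par \<omega>2"
    have "cv \<omega>1 = cv \<omega>2"
    proof
      fix i show "cv \<omega>1 i = cv \<omega>2 i"
      proof (cases "i = k")
        case True
        then show ?thesis using pe unfolding par_def by (auto simp: set_eq_iff)
      next
        case False
        then show ?thesis using fun_cong[OF conjunct2[OF conjunct2[OF fibD[OF o1]]], of i]
            fun_cong[OF conjunct2[OF conjunct2[OF fibD[OF o2]]], of i] by simp
      qed
    qed
    then show "\<omega>1 = \<omega>2" using fibD[OF o1] fibD[OF o2] trip[of \<omega>1] trip[of \<omega>2] by simp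
  qed
  have surj: "Pow {..<R} \<subseteq> par ` fib"
  proof
    fix W assume W: "W \<in> Pow {..<R}"
    define \<omega>W where "\<omega>W = (S, B, v(k := (\<lambda>j. j \<in> W)))"
    have omc: "(S,B,v) \<in> \<Omega>" using om omd by simp
    then have c1: "S \<in> block_partitions n r m" "\<forall>i j l. B i j l \<longrightarrow> i\<in>{1..r} \<and> j < m - a i \<and> l \<in> S i"
        "\<forall>i j. v i j \<longrightarrow> i\<in>{1..r} \<and> j < m - a i"
        "\<forall>i\<in>{1..<k}. S i = cS \<omega>0 i \<and> B i = cB \<omega>0 i \<and> v i = cv \<omega>0 i"
      using omc unfolding Omega_iff configs_iff by blast+
    have c2: "\<forall>i j. (v(k := (\<lambda>j. j \<in> W))) i j \<longrightarrow> i\<in>{1..r} \<and> j < m - a i"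
      using c1(3) W kr' unfolding R_def by auto
    have c3: "\<forall>i\<in>{1..<k}. (v(k := (\<lambda>j. j \<in> W))) i = cv \<omega>0 i" using c1(4) by auto
    have c4: "\<forall>i\<in>{1..<k}. S i = cS \<omega>0 i \<and> B i = cB \<omega>0 i \<and> (v(k := (\<lambda>j. j \<in> W))) i = cv \<omega>0 i"
      using c1(4) c3 by blast
    have "\<omega>W \<in> \<Omega>" unfolding \<omega>W_def Omega_iff configs_iff by (intro conjI) (rule c1(1), rule c1(2), rule c2, rule c4)
    moreover have "\<omega>W \<in> fib" using \<open>\<omega>W \<in> \<Omega>\<close> unfolding fib_def omd \<omega>W_def by (simp add: cS_def cB_def cv_def)
    moreover have "par \<omega>W = W" unfolding par_def \<omega>W_def by (simp add: cv_def)
    ultimately show "W \<in> par ` fib" by force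
  qed
  have cfib: "2 ^ R \<le> card fib"
  proof -
    have "card (Pow {..<R}) \<le> card (par ` fib)" by (rule card_mono) (use finfib surj in auto)
    also have "\<dots> \<le> card fib" by (rule card_image_le[OF finfib])
    finally show ?thesis by (simp add: card_Pow)
  qed
  have "real (card (E \<inter> fib)) \<le> 1 / 2^T * real (card fib)"
  proof (cases "a k + T \<le> hh \<omega> k")
    case False
    have "E \<inter> fib = {}"
    proof -
      have "hh \<omega>' k = hh \<omega> k" if "\<omega>' \<in> fib" for \<omega>' using fibD[OF that] omd by (simp add: hh_def cS_def)
      then show ?thesis using False unfolding E_def by auto
    qed
    then show ?thesis by simp
  next
    case True
    define X where "X = {x \<in> S k \<rightarrow>\<^sub>E (UNIV::bool set). \<forall>l\<in>HS \<inter> S k. x l = y l}"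
    define \<phi> where "\<phi> x = {j. j < R \<and> odd (card {l\<in>S k. B k j l \<and> x l})}" for x
    have sub: "par ` (E \<inter> fib) \<subseteq> \<phi> ` X"
    proof
      fix W assume "W \<in> par ` (E \<inter> fib)"
      then obtain \<omega>' where om': "\<omega>' \<in> E" "\<omega>' \<in> fib" "W = par \<omega>'" by auto
      have d: "\<omega>' = (S, B, cv \<omega>')" using fibD[OF om'(2)] trip[of \<omega>'] by simp
      have om'\<Omega>: "\<omega>' \<in> \<Omega>" using om'(2) unfolding fib_def by simp
      obtain x where x: "x \<in> cS \<omega>' k \<rightarrow>\<^sub>E (UNIV::bool set)" "\<forall>l\<in>HS \<inter> cS \<omega>' k. x l = y l" "block_sat m a \<omega>' k x"
        using mu_nonzero om'(1) unfolding E_def by blast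
      have cs': "cS \<omega>' = S" "cB \<omega>' = B" using fibD[OF om'(2)] by auto
      have xX: "x \<in> X" using x cs' unfolding X_def by simp
      have vR: "cv \<omega>' k j \<Longrightarrow> j < R" for j
        using Omega_conf[OF om'\<Omega>] d configs_iff[of S B "cv \<omega>'"] unfolding R_def by (auto simp: cv_def)
      have "par \<omega>' = \<phi> x"
      proof -
        have bs: "\<forall>j < R. odd (card {l\<in>S k. B k j l \<and> x l}) = cv \<omega>' k j"
          using x(3) cs' unfolding block_sat_def R_def by simp
        show ?thesis unfolding par_def \<phi>_def
        proof (rule set_eqI)
          fix j
          show "j \<in> {j. cv \<omega>' k j} \<longleftrightarrow> j \<in> {j. j < R \<and> odd (card {l\<in>S k. B k j l \<and> x l})}"
          proof (cases "j < R")
            case True then show ?thesis using bs[rule_format, OF True] by simp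
          next
            case False then show ?thesis using vR by auto
          qed
        qed
      qed
      then show "W \<in> \<phi> ` X" using om'(3) xX by auto
    qed
    have finS: "finite (S k)" using block_facts[OF om kr'] omd by (simp add: cS_def)
    have "card (E \<inter> fib) = card (par ` (E \<inter> fib))"
      by (rule card_image[symmetric]) (rule inj_on_subset[OF inj], auto)
    also have "\<dots> \<le> card (\<phi> ` X)" by (rule card_mono[OF _ sub]) (use finS in \<open>auto simp: X_def intro!: finite_imageI finite_subset[OF _ finite_PiE[OF finS, of "\<lambda>_. UNIV::bool set"]]\<close>)
    also have "\<dots> \<le> card X" by (rule card_image_le) (use finS in \<open>auto simp: X_def intro: finite_subset[OF _ finite_PiE[OF finS, of "\<lambda>_. UNIV::bool set"]]\<close>)
    also have "card X = 2 ^ card (S k - HS)" unfolding X_def by (rule cardX[OF finS])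
    also have "card (S k - HS) = m - hh \<omega> k" using card_S_minus_HS[OF om kr'] omd by (simp add: cS_def)
    finally have c1: "card (E \<inter> fib) \<le> 2 ^ (m - hh \<omega> k)" .
    have hm: "hh \<omega> k \<le> m" using card_S_minus_HS[OF om kr'] by simp
    have "(2::nat) ^ (m - hh \<omega> k) * 2 ^ T = 2 ^ (m - hh \<omega> k + T)" by (simp add: power_add)
    also have "\<dots> \<le> 2 ^ R" using True hm unfolding R_def by (intro power_increasing) auto
    finally have c2: "card (E \<inter> fib) * 2 ^ T \<le> card fib" using c1 cfib
      by (meson le_trans mult_le_mono1)
    then have "real (card (E \<inter> fib)) * 2 ^ T \<le> real (card fib)" by (metis of_nat_le_iff of_nat_mult of_nat_numeral of_nat_power)
    then show ?thesis by (simp add: field_simps)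
  qed
  then show "real (card ({\<omega>. mu \<omega> k \<noteq> 0 \<and> a k + T \<le> hh \<omega> k} \<inter> {\<omega>'\<in>\<Omega>. (cS \<omega>', cB \<omega>', (cv \<omega>')(k := (\<lambda>_. False))) = (cS \<omega>, cB \<omega>, (cv \<omega>)(k := (\<lambda>_. False)))}))
    \<le> 1 / 2 ^ T * real (card {\<omega>'\<in>\<Omega>. (cS \<omega>', cB \<omega>', (cv \<omega>')(k := (\<lambda>_. False))) = (cS \<omega>, cB \<omega>, (cv \<omega>)(k := (\<lambda>_. False)))})"
    unfolding E_def fib_def .
qed

end


context hsetup begin

lemma F2_bound:
  assumes iK: "i \<in> {k<..r}"
  shows "real (card ({\<omega>. mu \<omega> i \<noteq> 2 powr (real (a i) - real (hh \<omega> i)) \<and> hh \<omega> i + T \<le> a i} \<inter> \<Omega>))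
           \<le> (1 / 2^T) * real (card \<Omega>)"
proof (rule fiber_bound[OF finOmega, where g="\<lambda>\<omega>. (cS \<omega>, \<lambda>i' j l. if i' = i \<and> j < m - a i \<and> l \<in> cS \<omega> i - HS then False else cB \<omega> i' j l, cv \<omega>)"])
  fix \<omega> assume om: "\<omega> \<in> \<Omega>"
  obtain S B v where omd: "\<omega> = (S,B,v)" by (cases \<omega>) auto
  define g where "g \<omega> = (cS \<omega>, \<lambda>i' j l. if i' = i \<and> j < m - a i \<and> l \<in> cS \<omega> i - HS then False else cB \<omega> i' j l, cv \<omega>)" for \<omega>
  define E where "E = {\<omega>. mu \<omega> i \<noteq> 2 powr (real (a i) - real (hh \<omega> i)) \<and> hh \<omega> i + T \<le> a i}"
  define fib where "fib = {\<omega>'\<in>\<Omega>. g \<omega>' = g \<omega>}"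
  define R where "R = m - a i"
  define F where "F = S i - HS"
  define par where "par \<omega>' = {p \<in> {..<R} \<times> F. cB \<omega>' i (fst p) (snd p)}" for \<omega>' :: config
  have ir: "i \<in> {1..r}" using iK k1 by auto
  have aim0: "a i < m" using am ir by blast
  have finfib: "finite fib" unfolding fib_def using finOmega by auto
  have finS: "finite (S i)" using block_facts[OF om ir] omd by (simp add: cS_def)
  have finF: "finite F" unfolding F_def using finS by simp
  have cF: "card F = m - hh \<omega> i" unfolding F_def using card_S_minus_HS[OF om ir] omd by (simp add: cS_def)
  have hm: "hh \<omega> i \<le> m" using card_S_minus_HS[OF om ir] by simp
  have R1: "1 \<le> R"
  proof -
    have "a i < m" using am ir by blast
    then show ?thesis unfolding R_def by simp
  qed
  have fibD: "cS \<omega>' = S \<and> cv \<omega>' = v \<and> (\<forall>i' j l. \<not> (i' = i \<and> j < R \<and> l \<in> F) \<longrightarrow> cB \<omega>' i' j l = B i' j l)"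
    if "\<omega>' \<in> fib" for \<omega>'
  proof -
    have e: "g \<omega>' = g \<omega>" using that unfolding fib_def by simp
    then have s: "cS \<omega>' = S" and vv: "cv \<omega>' = v" unfolding g_def omd by (simp_all add: cS_def cv_def)
    have e2: "(\<lambda>i' j l. if i' = i \<and> j < m - a i \<and> l \<in> cS \<omega>' i - HS then False else cB \<omega>' i' j l)
          = (\<lambda>i' j l. if i' = i \<and> j < m - a i \<and> l \<in> cS \<omega> i - HS then False else cB \<omega> i' j l)"
    proof -
      have "fst (snd (g \<omega>')) = fst (snd (g \<omega>))" using e by simp
      then show ?thesis unfolding g_def by simp
    qed
    have "\<forall>i' j l. \<not> (i' = i \<and> j < R \<and> l \<in> F) \<longrightarrow> cB \<omega>' i' j l = B i' j l"
    proof (intro allI impI)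
      fix i' j l assume nz: "\<not> (i' = i \<and> j < R \<and> l \<in> F)"
      have "(\<lambda>i' j l. if i' = i \<and> j < m - a i \<and> l \<in> cS \<omega>' i - HS then False else cB \<omega>' i' j l) i' j l
          = (\<lambda>i' j l. if i' = i \<and> j < m - a i \<and> l \<in> cS \<omega> i - HS then False else cB \<omega> i' j l) i' j l"
        using fun_cong[OF fun_cong[OF fun_cong[OF e2, of i'], of j], of l] .
      moreover have "cB \<omega> = B" "cS \<omega> = S" using omd by (simp_all add: cB_def cS_def)
      ultimately show "cB \<omega>' i' j l = B i' j l" using nz s unfolding R_def F_def by (auto split: if_splits)
    qed
    then show ?thesis using s vv by simp
  qed
  have inj: "inj_on par fib"
  proof (rule inj_onI)
    fix \<omega>1 \<omega>2 assume o1: "\<omega>1 \<in> fib" and o2: "\<omega>2 \<in> fib" and pe: "par \<omega>1 = par \<omega>2"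
    have "cB \<omega>1 = cB \<omega>2"
    proof (intro ext)
      fix i' j l
      show "cB \<omega>1 i' j l = cB \<omega>2 i' j l"
      proof (cases "i' = i \<and> j < R \<and> l \<in> F")
        case True
        have "(j,l) \<in> par \<omega>1 \<longleftrightarrow> (j,l) \<in> par \<omega>2" using pe by simp
        then show ?thesis using True unfolding par_def by auto
      next
        case False
        then show ?thesis using fibD[OF o1] fibD[OF o2] by simp
      qed
    qed
    then show "\<omega>1 = \<omega>2" using fibD[OF o1] fibD[OF o2] trip[of \<omega>1] trip[of \<omega>2] by simp
  qed
  have surj: "Pow ({..<R} \<times> F) \<subseteq> par ` fib"
  proof
    fix M assume M: "M \<in> Pow ({..<R} \<times> F)"
    define B' where "B' = (\<lambda>i' j l. if i' = i \<and> j < R \<and> l \<in> F then (j,l) \<in> M else B i' j l)"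
    define \<omega>M where "\<omega>M = (S, B', v)"
    have omc: "(S,B,v) \<in> \<Omega>" using om omd by simp
    then have c1: "S \<in> block_partitions n r m" "\<forall>i j l. B i j l \<longrightarrow> i\<in>{1..r} \<and> j < m - a i \<and> l \<in> S i"
        "\<forall>i j. v i j \<longrightarrow> i\<in>{1..r} \<and> j < m - a i"
        "\<forall>i\<in>{1..<k}. S i = cS \<omega>0 i \<and> B i = cB \<omega>0 i \<and> v i = cv \<omega>0 i"
      unfolding Omega_iff configs_iff by blast+
    have c2: "\<forall>i' j l. B' i' j l \<longrightarrow> i'\<in>{1..r} \<and> j < m - a i' \<and> l \<in> S i'"
    proof (intro allI impI)
      fix i' j l assume "B' i' j l"
      then show "i'\<in>{1..r} \<and> j < m - a i' \<and> l \<in> S i'"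
        using c1(2) ir unfolding B'_def R_def F_def by (auto split: if_splits)
    qed
    have c3: "\<forall>i'\<in>{1..<k}. S i' = cS \<omega>0 i' \<and> B' i' = cB \<omega>0 i' \<and> v i' = cv \<omega>0 i'"
    proof
      fix i' assume i': "i' \<in> {1..<k}"
      then have "i' \<noteq> i" using iK by auto
      then have "B' i' = B i'" unfolding B'_def by auto
      then show "S i' = cS \<omega>0 i' \<and> B' i' = cB \<omega>0 i' \<and> v i' = cv \<omega>0 i'" using c1(4) i' by auto
    qed
    have inO: "\<omega>M \<in> \<Omega>" unfolding \<omega>M_def Omega_iff configs_iff
      by (intro conjI) (rule c1(1), rule c2, rule c1(3), rule c3)
    have "g \<omega>M = g \<omega>"
    proof -
      have "(\<lambda>i' j l. if i' = i \<and> j < m - a i \<and> l \<in> S i - HS then False else B' i' j l)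
          = (\<lambda>i' j l. if i' = i \<and> j < m - a i \<and> l \<in> S i - HS then False else B i' j l)"
        unfolding B'_def R_def F_def by (intro ext) auto
      then show ?thesis unfolding g_def \<omega>M_def omd cS_def cB_def cv_def fst_conv snd_conv
        by (simp only: prod.inject simp_thms)
    qed
    then have "\<omega>M \<in> fib" using inO unfolding fib_def by simp
    moreover have "par \<omega>M = M" using M unfolding par_def \<omega>M_def B'_def by (auto simp: cB_def)
    ultimately show "M \<in> par ` fib" by force
  qed
  have cfib: "2 ^ (R * card F) \<le> card fib"
  proof -
    have "card (Pow ({..<R} \<times> F)) \<le> card (par ` fib)" by (rule card_mono) (use finfib surj in auto)
    also have "\<dots> \<le> card fib" by (rule card_image_le[OF finfib])
    finally show ?thesis using finF by (simp add: card_Pow card_cartesian_product)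
  qed
  have "real (card (E \<inter> fib)) \<le> 1 / 2^T * real (card fib)"
  proof (cases "hh \<omega> i + T \<le> a i")
    case False
    have "E \<inter> fib = {}"
    proof -
      have "hh \<omega>' i = hh \<omega> i" if "\<omega>' \<in> fib" for \<omega>' using fibD[OF that] omd by (simp add: hh_def cS_def)
      then show ?thesis using False unfolding E_def by auto
    qed
    then show ?thesis by simp
  next
    case True
    define bad where "bad = {M \<in> Pow ({..<R} \<times> F). \<exists>u\<in>{..<R} \<rightarrow>\<^sub>E (UNIV::bool set). (\<exists>j<R. u j) \<and>
            (\<forall>l\<in>F. even (card {j\<in>{..<R}. u j \<and> (j,l)\<in>M}))}"
    have sub: "par ` (E \<inter> fib) \<subseteq> bad"
    proof
      fix M assume "M \<in> par ` (E \<inter> fib)"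
      then obtain \<omega>' where om': "\<omega>' \<in> E" "\<omega>' \<in> fib" "M = par \<omega>'" by auto
      have cs': "cS \<omega>' = S" "cv \<omega>' = v" using fibD[OF om'(2)] by auto
      have hh': "hh \<omega>' i = hh \<omega> i" using cs' omd by (simp add: hh_def cS_def)
      have Msub: "M \<in> Pow ({..<R} \<times> F)" using om'(3) unfolding par_def by auto
      show "M \<in> bad"
      proof (rule ccontr)
        assume nb: "M \<notin> bad"
        have K: "\<forall>u\<in>{..<R} \<rightarrow>\<^sub>E (UNIV::bool set). (\<exists>j<R. u j) \<longrightarrow>
              (\<exists>l\<in>S i - HS. odd (card {j\<in>{..<R}. u j \<and> cB \<omega>' i j l}))"
        proof (intro ballI impI)
          fix u assume u: "u \<in> {..<R} \<rightarrow>\<^sub>E (UNIV::bool set)" "\<exists>j<R. u j"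
          then obtain l where l: "l \<in> F" "odd (card {j\<in>{..<R}. u j \<and> (j,l)\<in>M})"
            using nb Msub unfolding bad_def by auto
          have "{j\<in>{..<R}. u j \<and> (j,l)\<in>M} = {j\<in>{..<R}. u j \<and> cB \<omega>' i j l}"
            using l(1) om'(3) unfolding par_def by auto
          then show "\<exists>l\<in>S i - HS. odd (card {j\<in>{..<R}. u j \<and> cB \<omega>' i j l})" using l unfolding F_def by auto
        qed
        have cnt: "real (card {x\<in>S i \<rightarrow>\<^sub>E (UNIV::bool set). (\<forall>l\<in>HS\<inter>S i. x l = y l) \<and>
            (\<forall>j<R. odd (card {l\<in>S i. cB \<omega>' i j l \<and> x l}) = cv \<omega>' i j)}) * 2 ^ R = 2 ^ card (S i - HS)"
          by (rule count_formula[OF finS K])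
        have "mu \<omega>' i = real (card {x\<in>S i \<rightarrow>\<^sub>E (UNIV::bool set). (\<forall>l\<in>HS\<inter>S i. x l = y l) \<and>
            (\<forall>j<R. odd (card {l\<in>S i. cB \<omega>' i j l \<and> x l}) = cv \<omega>' i j)})"
          unfolding mu_def muiH_def block_sat_def R_def using cs' by (simp add: Int_commute)
        then have mu2: "mu \<omega>' i * 2 ^ R = 2 ^ card F" using cnt unfolding F_def by simp
        have "2 powr (real (a i) - real (hh \<omega>' i)) = 2 powr (real (card F) - real R)"
        proof -
          have "real (card F) - real R = real (a i) - real (hh \<omega> i)"
          proof -
            have aim: "a i < m" using am ir by blast
            then show ?thesis using cF hm True unfolding R_def by (simp add: of_nat_diff)
          qed
          then show ?thesis using hh' by simp
        qed
        also have "\<dots> = 2 ^ card F / 2 ^ R" by (simp add: powr_diff powr_realpow)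
        also have "\<dots> = mu \<omega>' i" using mu2 by (simp add: field_simps)
        finally show False using om'(1) unfolding E_def by simp
      qed
    qed
    have "card (E \<inter> fib) = card (par ` (E \<inter> fib))"
      by (rule card_image[symmetric]) (rule inj_on_subset[OF inj], auto)
    also have "\<dots> \<le> card bad"
      by (rule card_mono[OF _ sub]) (use finF in \<open>auto simp: bad_def\<close>)
    also have "\<dots> \<le> 2 ^ R * 2 ^ ((R-1) * card F)" unfolding bad_def by (rule bad_matrix_count[OF finF])
    finally have c1: "card (E \<inter> fib) \<le> 2 ^ R * 2 ^ ((R-1) * card F)" .
    have "(2::nat) ^ R * 2 ^ ((R-1) * card F) * 2 ^ T = 2 ^ (R + (R-1) * card F + T)" by (simp add: power_add)
    also have "\<dots> \<le> 2 ^ (R * card F)"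
    proof (rule power_increasing)
      have "R * card F = (R-1) * card F + card F" using R1 by (metis Suc_diff_le diff_Suc_1 mult_Suc add.commute)
      moreover have "R + T \<le> card F" using cF True hm aim0 unfolding R_def by auto
      ultimately show "R + (R-1) * card F + T \<le> R * card F" by linarith
    qed simp
    finally have c2: "card (E \<inter> fib) * 2 ^ T \<le> card fib" using c1 cfib
      by (meson le_trans mult_le_mono1)
    then have "real (card (E \<inter> fib)) * 2 ^ T \<le> real (card fib)" by (metis of_nat_le_iff of_nat_mult of_nat_numeral of_nat_power)
    then show ?thesis by (simp add: field_simps)
  qed
  then show "real (card ({\<omega>. mu \<omega> i \<noteq> 2 powr (real (a i) - real (hh \<omega> i)) \<and> hh \<omega> i + T \<le> a i} \<inter>
      {\<omega>'\<in>\<Omega>. (cS \<omega>', \<lambda>i' j l. if i' = i \<and> j < m - a i \<and> l \<in> cS \<omega>' i - HS then False else cB \<omega>' i' j l, cv \<omega>') =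
                 (cS \<omega>, \<lambda>i' j l. if i' = i \<and> j < m - a i \<and> l \<in> cS \<omega> i - HS then False else cB \<omega> i' j l, cv \<omega>)}))
    \<le> 1 / 2 ^ T * real (card {\<omega>'\<in>\<Omega>. (cS \<omega>', \<lambda>i' j l. if i' = i \<and> j < m - a i \<and> l \<in> cS \<omega>' i - HS then False else cB \<omega>' i' j l, cv \<omega>') =
                 (cS \<omega>, \<lambda>i' j l. if i' = i \<and> j < m - a i \<and> l \<in> cS \<omega> i - HS then False else cB \<omega> i' j l, cv \<omega>)})"
    unfolding E_def fib_def g_def .
qed

end


lemma bp_facts:
  assumes "S \<in> block_partitions n r m"
  shows "\<And>i. i \<in> {1..r} \<Longrightarrow> S i \<subseteq> {1..n}" "\<And>i. i \<in> {1..r} \<Longrightarrow> card (S i) = m"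
    "\<And>i j. i \<in> {1..r} \<Longrightarrow> j \<in> {1..r} \<Longrightarrow> i \<noteq> j \<Longrightarrow> S i \<inter> S j = {}"
    "(\<Union>i\<in>{1..r}. S i) = {1..n}" "\<And>i. i \<notin> {1..r} \<Longrightarrow> S i = {}"
  using assms unfolding block_partitions_def by auto

lemma bp_intro:
  assumes "\<And>i. i \<in> {1..r} \<Longrightarrow> S i \<subseteq> {1..n}" "\<And>i. i \<in> {1..r} \<Longrightarrow> card (S i) = m"
    "\<And>i j. i \<in> {1..r} \<Longrightarrow> j \<in> {1..r} \<Longrightarrow> i \<noteq> j \<Longrightarrow> S i \<inter> S j = {}"
    "(\<Union>i\<in>{1..r}. S i) = {1..n}" "\<And>i. i \<notin> {1..r} \<Longrightarrow> S i = {}"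
  shows "S \<in> block_partitions n r m"
  using assms unfolding block_partitions_def by auto

lemma card_union_blocks:
  assumes S: "S \<in> block_partitions n r m" and k: "k \<in> {1..r}" and i: "i \<in> {1..r}" and ki: "k \<noteq> i"
  shows "card (S k \<union> S i) = 2*m"
proof -
  have f: "finite (S k)" "finite (S i)" using bp_facts(1)[OF S k] bp_facts(1)[OF S i] finite_subset by auto
  have "card (S k \<union> S i) = card (S k) + card (S i)"
    by (rule card_Un_disjoint) (use f bp_facts(3)[OF S k i ki] in auto)
  then show ?thesis using bp_facts(2)[OF S k] bp_facts(2)[OF S i] by simp
qed

lemma swap_partition:
  assumes S: "S \<in> block_partitions n r m" and k: "k \<in> {1..r}" and i: "i \<in> {1..r}" and ki: "k \<noteq> i"
    and Q: "Q \<subseteq> S k \<union> S i" "card Q = m"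
  shows "S(k := (S k \<union> S i) - Q, i := Q) \<in> block_partitions n r m"
proof -
  define U where "U = S k \<union> S i"
  define S' where "S' = S(k := U - Q, i := Q)"
  have U: "U \<subseteq> {1..n}" unfolding U_def using bp_facts(1)[OF S k] bp_facts(1)[OF S i] by auto
  have cU: "card U = 2*m" unfolding U_def by (rule card_union_blocks[OF S k i ki])
  have finU: "finite U" using U finite_subset by auto
  have S'k: "S' k = U - Q" and S'i: "S' i = Q" and S'j: "\<And>j. j \<noteq> k \<Longrightarrow> j \<noteq> i \<Longrightarrow> S' j = S j"
    unfolding S'_def using ki by auto
  have disjU: "\<And>j. j \<in> {1..r} \<Longrightarrow> j \<noteq> k \<Longrightarrow> j \<noteq> i \<Longrightarrow> S j \<inter> U = {}"
    unfolding U_def using bp_facts(3)[OF S] k i by blast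
  have "S' \<in> block_partitions n r m"
  proof (rule bp_intro)
    fix j assume j: "j \<in> {1..r}"
    show "S' j \<subseteq> {1..n}" using S'k S'i S'j[of j] U Q bp_facts(1)[OF S j] unfolding U_def by (cases "j = k"; cases "j = i") auto
    show "card (S' j) = m"
    proof (cases "j = k")
      case True
      have "card (U - Q) = card U - card Q" using Q finU unfolding U_def by (simp add: card_Diff_subset finite_subset)
      then show ?thesis using True S'k cU Q by simp
    next
      case False
      then show ?thesis using S'i S'j[of j] Q bp_facts(2)[OF S j] by (cases "j = i") auto
    qed
  next
    fix j j' assume j: "j \<in> {1..r}" and j': "j' \<in> {1..r}" and jj: "j \<noteq> j'"
    show "S' j \<inter> S' j' = {}"
    proof (cases "j \<in> {k,i}")
      case True
      show ?thesis
      proof (cases "j' \<in> {k,i}")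
        case True
        then show ?thesis using \<open>j \<in> {k,i}\<close> jj S'k S'i by auto
      next
        case False
        then have "S' j' = S j'" "S j' \<inter> U = {}" using S'j disjU j' by auto
        moreover have "S' j \<subseteq> U" using \<open>j \<in> {k,i}\<close> S'k S'i Q unfolding U_def by auto
        ultimately show ?thesis by auto
      qed
    next
      case False
      show ?thesis
      proof (cases "j' \<in> {k,i}")
        case True
        then have "S' j' \<subseteq> U" using S'k S'i Q unfolding U_def by auto
        moreover have "S' j = S j" "S j \<inter> U = {}" using S'j disjU j False by auto
        ultimately show ?thesis by auto
      next
        case False
        then show ?thesis using \<open>j \<notin> {k,i}\<close> S'j bp_facts(3)[OF S j j' jj] by auto
      qed
    qed
  next
    show "(\<Union>j\<in>{1..r}. S' j) = {1..n}"
    proof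
      show "(\<Union>j\<in>{1..r}. S' j) \<subseteq> {1..n}"
      proof
        fix x assume "x \<in> (\<Union>j\<in>{1..r}. S' j)"
        then obtain j where j: "j \<in> {1..r}" "x \<in> S' j" by auto
        have "S' j \<subseteq> U \<or> S' j = S j" using S'k S'i S'j[of j] Q unfolding U_def by (cases "j=k"; cases "j=i") auto
        then show "x \<in> {1..n}" using U bp_facts(1)[OF S j(1)] j(2) by blast
      qed
      show "{1..n} \<subseteq> (\<Union>j\<in>{1..r}. S' j)"
      proof
        fix x assume "x \<in> {1..n}"
        then have "x \<in> (\<Union>j\<in>{1..r}. S j)" using bp_facts(4)[OF S] by simp
    then obtain j where j: "j \<in> {1..r}" "x \<in> S j" by blast
        show "x \<in> (\<Union>j\<in>{1..r}. S' j)"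
        proof (cases "j \<in> {k,i}")
          case True
          then have "x \<in> U" using j unfolding U_def by auto
          then have "x \<in> S' k \<or> x \<in> S' i" using S'k S'i by auto
          then show ?thesis using k i by auto
        next
          case False
          then have "x \<in> S' j" using j S'j[of j] by auto
          then show ?thesis using j(1) by blast
        qed
      qed
    qed
  next
    fix j assume "j \<notin> {1..r}"
    then show "S' j = {}" using S'j bp_facts(5)[OF S] k i by auto
  qed
  then show ?thesis unfolding S'_def U_def .
qed

lemma partition_fiber:
  assumes S: "S \<in> block_partitions n r m" and S': "S' \<in> block_partitions n r m"
    and k: "k \<in> {1..r}" and i: "i \<in> {1..r}" and ki: "k \<noteq> i"
    and agree: "\<And>j. j \<noteq> k \<Longrightarrow> j \<noteq> i \<Longrightarrow> S' j = S j"
  shows "S' i \<subseteq> S k \<union> S i" "S' k = (S k \<union> S i) - S' i"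
proof -
  define U where "U = S k \<union> S i"
  have inU: "x \<in> U" if x: "x \<in> S' j" and jki: "j = k \<or> j = i" for x j
  proof -
    have j: "j \<in> {1..r}" using jki k i by auto
    have "x \<in> {1..n}" using bp_facts(1)[OF S' j] x by auto
    then have "x \<in> (\<Union>j\<in>{1..r}. S j)" using bp_facts(4)[OF S] by simp
    then obtain j' where j': "j' \<in> {1..r}" "x \<in> S j'" by blast
    show "x \<in> U"
    proof (cases "j' = k \<or> j' = i")
      case True then show ?thesis using j' unfolding U_def by auto
    next
      case False
      then have "x \<in> S' j'" using agree j'(2) by auto
      moreover have "S' j' \<inter> S' j = {}" using bp_facts(3)[OF S' j'(1) j] False jki by auto
      ultimately show ?thesis using x by auto
    qed
  qed
  show "S' i \<subseteq> S k \<union> S i" using inU unfolding U_def by blast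
  show "S' k = (S k \<union> S i) - S' i"
  proof
    show "S' k \<subseteq> S k \<union> S i - S' i"
      using inU bp_facts(3)[OF S' k i ki] unfolding U_def by blast
    show "S k \<union> S i - S' i \<subseteq> S' k"
    proof
      fix x assume x: "x \<in> S k \<union> S i - S' i"
      have "x \<in> {1..n}" using x bp_facts(1)[OF S k] bp_facts(1)[OF S i] by auto
      then have "x \<in> (\<Union>j\<in>{1..r}. S' j)" using bp_facts(4)[OF S'] by simp
    then obtain j where j: "j \<in> {1..r}" "x \<in> S' j" by blast
      show "x \<in> S' k"
      proof (cases "j = k")
        case True then show ?thesis using j by simp
      next
        case False
        have "j \<noteq> i" using j x by auto
        then have "x \<in> S j" using agree False j by auto
        moreover have "S j \<inter> S k = {}" "S j \<inter> S i = {}" using bp_facts(3)[OF S] j k i False \<open>j \<noteq> i\<close> by auto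
        ultimately show ?thesis using x by auto
      qed
    qed
  qed
qed



context hsetup begin

definition Parts where "Parts = {S \<in> block_partitions n r m. \<forall>j\<in>{1..<k}. S j = cS \<omega>0 j}"
definition DB where "DB S = Sigma {k..r} (\<lambda>i. {..<m - a i} \<times> S i)" for S :: "nat \<Rightarrow> nat set"
definition Dv where "Dv = Sigma {k..r} (\<lambda>i. {..<m - a i})"
definition N0 where "N0 = 2 ^ (\<Sum>i\<in>{k..r}. (m - a i) * m) * 2 ^ card Dv"

lemma cS_Parts:
  assumes "\<omega> \<in> \<Omega>" shows "cS \<omega> \<in> Parts"
proof -
  have "cS \<omega> \<in> block_partitions n r m" using Omega_conf[OF assms] unfolding configs_def by simp
  moreover have "\<forall>j\<in>{1..<k}. cS \<omega> j = cS \<omega>0 j" using assms unfolding configs_given_def by simp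
  ultimately show ?thesis unfolding Parts_def by simp
qed

lemma low_blocks:
  assumes "\<omega> \<in> \<Omega>" "i < k"
  shows "cB \<omega> i = cB \<omega>0 i" "cv \<omega> i = cv \<omega>0 i"
proof -
  have c: "\<omega> \<in> configs n r m a" using assms(1) by (rule Omega_conf)
  show "cB \<omega> i = cB \<omega>0 i"
  proof (cases "i = 0")
    case True
    have h1: "\<And>j l. \<not> cB \<omega> 0 j l" using c unfolding configs_def by fastforce
    have h2: "\<And>j l. \<not> cB \<omega>0 0 j l" using om0 unfolding configs_def by fastforce
    show ?thesis using True h1 h2 by (intro ext) simp
  next
    case False
    then show ?thesis using assms unfolding configs_given_def by auto
  qed
  show "cv \<omega> i = cv \<omega>0 i"
  proof (cases "i = 0")
    case True
    have h1: "\<And>j. \<not> cv \<omega> 0 j" using c unfolding configs_def by fastforce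
    have h2: "\<And>j. \<not> cv \<omega>0 0 j" using om0 unfolding configs_def by fastforce
    show ?thesis using True h1 h2 by (intro ext) simp
  next
    case False
    then show ?thesis using assms unfolding configs_given_def by auto
  qed
qed

lemma fiberS:
  assumes SP: "S \<in> Parts"
  shows "card {\<omega>\<in>\<Omega>. cS \<omega> = S} = N0"
proof -
  define A where "A = {\<omega>\<in>\<Omega>. cS \<omega> = S}"
  define A' where "A' = Pow (DB S) \<times> Pow Dv"
  define \<phi> where "\<phi> \<omega> = ({p. k \<le> fst p \<and> cB \<omega> (fst p) (fst (snd p)) (snd (snd p))},
                         {p. k \<le> fst p \<and> cv \<omega> (fst p) (snd p)})" for \<omega>
  define \<psi> where "\<psi> XY = (S, \<lambda>i j l. if i < k then cB \<omega>0 i j l else (i,(j,l)) \<in> fst XY,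
                              \<lambda>i j. if i < k then cv \<omega>0 i j else (i,j) \<in> snd XY)" for XY
  have Sbp: "S \<in> block_partitions n r m" and Sag: "\<forall>j\<in>{1..<k}. S j = cS \<omega>0 j" using SP unfolding Parts_def by auto
  have finSi: "finite (S i)" if "i \<in> {1..r}" for i using bp_facts(1)[OF Sbp that] finite_subset by blast
  have bij: "bij_betw \<phi> A A'"
  proof (rule bij_betw_byWitness[where f'=\<psi>])
    show "\<forall>\<omega>\<in>A. \<psi> (\<phi> \<omega>) = \<omega>"
    proof
      fix \<omega> assume om: "\<omega> \<in> A"
      have omO: "\<omega> \<in> \<Omega>" using om unfolding A_def by simp
      have "cB \<omega> = (\<lambda>i j l. if i < k then cB \<omega>0 i j l else (i,(j,l)) \<in> fst (\<phi> \<omega>))"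
      proof (intro ext)
        fix i j l show "cB \<omega> i j l = (if i < k then cB \<omega>0 i j l else (i,(j,l)) \<in> fst (\<phi> \<omega>))"
          by (cases "i < k") (simp_all add: \<phi>_def low_blocks[OF omO])
      qed
      moreover have "cv \<omega> = (\<lambda>i j. if i < k then cv \<omega>0 i j else (i,j) \<in> snd (\<phi> \<omega>))"
      proof (intro ext)
        fix i j show "cv \<omega> i j = (if i < k then cv \<omega>0 i j else (i,j) \<in> snd (\<phi> \<omega>))"
          by (cases "i < k") (simp_all add: \<phi>_def low_blocks[OF omO])
      qed
      moreover have "cS \<omega> = S" using om unfolding A_def by simp
      ultimately show "\<psi> (\<phi> \<omega>) = \<omega>" unfolding \<psi>_def using trip[of \<omega>] by simp
    qed
    show "\<forall>XY\<in>A'. \<phi> (\<psi> XY) = XY"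
    proof
      fix XY assume XY: "XY \<in> A'"
      obtain X Y where XYd: "XY = (X,Y)" by (cases XY) auto
      have X: "X \<subseteq> DB S" and Y: "Y \<subseteq> Dv" using XY XYd unfolding A'_def by auto
      have Xk: "k \<le> fst p" if "p \<in> X" for p using X that unfolding DB_def by auto
      have Yk: "k \<le> fst p" if "p \<in> Y" for p using Y that unfolding Dv_def by auto
      have e1: "{p. k \<le> fst p \<and> (if fst p < k then cB \<omega>0 (fst p) (fst (snd p)) (snd (snd p)) else (fst p, fst (snd p), snd (snd p)) \<in> X)} = X"
      proof (rule set_eqI)
        fix p :: "nat \<times> nat \<times> nat"
        show "p \<in> {p. k \<le> fst p \<and> (if fst p < k then cB \<omega>0 (fst p) (fst (snd p)) (snd (snd p)) else (fst p, fst (snd p), snd (snd p)) \<in> X)} \<longleftrightarrow> p \<in> X"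
          using Xk[of p] by (cases "fst p < k") auto
      qed
      have e2: "{p. k \<le> fst p \<and> (if fst p < k then cv \<omega>0 (fst p) (snd p) else (fst p, snd p) \<in> Y)} = Y"
      proof (rule set_eqI)
        fix p :: "nat \<times> nat"
        show "p \<in> {p. k \<le> fst p \<and> (if fst p < k then cv \<omega>0 (fst p) (snd p) else (fst p, snd p) \<in> Y)} \<longleftrightarrow> p \<in> Y"
          using Yk[of p] by (cases "fst p < k") auto
      qed
      show "\<phi> (\<psi> XY) = XY" unfolding \<phi>_def \<psi>_def XYd cB_def cv_def fst_conv snd_conv
        using e1[unfolded cB_def] e2[unfolded cv_def] by (simp only: prod.inject simp_thms)
    qed
    show "\<phi> ` A \<subseteq> A'"
    proof (rule image_subsetI)
      fix \<omega> assume om: "\<omega> \<in> A"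
      have omO: "\<omega> \<in> \<Omega>" and cs: "cS \<omega> = S" using om unfolding A_def by auto
      have c: "\<omega> \<in> configs n r m a" using omO by (rule Omega_conf)
      have "\<forall>i j l. cB \<omega> i j l \<longrightarrow> i\<in>{1..r} \<and> j < m - a i \<and> l \<in> S i"
        using c cs unfolding configs_def by simp
      moreover have "\<forall>i j. cv \<omega> i j \<longrightarrow> i\<in>{1..r} \<and> j < m - a i"
        using c unfolding configs_def by simp
      ultimately have h: "\<forall>i j l. cB \<omega> i j l \<longrightarrow> i\<in>{1..r} \<and> j < m - a i \<and> l \<in> S i"
        "\<forall>i j. cv \<omega> i j \<longrightarrow> i\<in>{1..r} \<and> j < m - a i" by blast+
      have "fst (\<phi> \<omega>) \<subseteq> DB S"
      proof
        fix p assume "p \<in> fst (\<phi> \<omega>)"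
        then have "k \<le> fst p" "cB \<omega> (fst p) (fst (snd p)) (snd (snd p))" unfolding \<phi>_def by auto
        then show "p \<in> DB S" using h(1) unfolding DB_def by (cases p) auto
      qed
      moreover have "snd (\<phi> \<omega>) \<subseteq> Dv"
      proof
        fix p assume "p \<in> snd (\<phi> \<omega>)"
        then have "k \<le> fst p" "cv \<omega> (fst p) (snd p)" unfolding \<phi>_def by auto
        then show "p \<in> Dv" using h(2) unfolding Dv_def by (cases p) auto
      qed
      ultimately show "\<phi> \<omega> \<in> A'" unfolding A'_def by (simp add: mem_Times_iff)
    qed
    show "\<psi> ` A' \<subseteq> A"
    proof (rule image_subsetI)
      fix XY assume XY: "XY \<in> A'"
      obtain X Y where XYd: "XY = (X,Y)" by (cases XY) auto
      have X: "X \<subseteq> DB S" and Y: "Y \<subseteq> Dv" using XY XYd unfolding A'_def by auto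
      have c0: "\<forall>i j l. cB \<omega>0 i j l \<longrightarrow> i\<in>{1..r} \<and> j < m - a i \<and> l \<in> cS \<omega>0 i"
          "\<forall>i j. cv \<omega>0 i j \<longrightarrow> i\<in>{1..r} \<and> j < m - a i"
        using om0 unfolding configs_def by simp_all
      have cB': "\<forall>i j l. (if i < k then cB \<omega>0 i j l else (i,(j,l)) \<in> X) \<longrightarrow> i\<in>{1..r} \<and> j < m - a i \<and> l \<in> S i"
      proof (intro allI impI)
        fix i j l assume h: "if i < k then cB \<omega>0 i j l else (i,(j,l)) \<in> X"
        show "i\<in>{1..r} \<and> j < m - a i \<and> l \<in> S i"
        proof (cases "i < k")
          case True
          then have "cB \<omega>0 i j l" using h by simp
          then have "i\<in>{1..r} \<and> j < m - a i \<and> l \<in> cS \<omega>0 i" using c0 by blast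
          moreover then have "S i = cS \<omega>0 i" using Sag True by auto
          ultimately show ?thesis by simp
        next
          case False
          then show ?thesis using h X k1 unfolding DB_def by auto
        qed
      qed
      have cv': "\<forall>i j. (if i < k then cv \<omega>0 i j else (i,j) \<in> Y) \<longrightarrow> i\<in>{1..r} \<and> j < m - a i"
      proof (intro allI impI)
        fix i j assume h: "if i < k then cv \<omega>0 i j else (i,j) \<in> Y"
        show "i\<in>{1..r} \<and> j < m - a i"
        proof (cases "i < k")
          case True then show ?thesis using h c0(2) by simp
        next
          case False then show ?thesis using h Y k1 unfolding Dv_def by auto
        qed
      qed
      have ag: "\<forall>i\<in>{1..<k}. S i = cS \<omega>0 i \<and> (\<lambda>j l. if i < k then cB \<omega>0 i j l else (i,(j,l)) \<in> X) = cB \<omega>0 i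
            \<and> (\<lambda>j. if i < k then cv \<omega>0 i j else (i,j) \<in> Y) = cv \<omega>0 i"
      proof
        fix i assume i: "i \<in> {1..<k}"
        then have "i < k" by simp
        then show "S i = cS \<omega>0 i \<and> (\<lambda>j l. if i < k then cB \<omega>0 i j l else (i,(j,l)) \<in> X) = cB \<omega>0 i
            \<and> (\<lambda>j. if i < k then cv \<omega>0 i j else (i,j) \<in> Y) = cv \<omega>0 i" using Sag i by simp
      qed
      have "\<psi> XY \<in> \<Omega>" unfolding \<psi>_def XYd fst_conv snd_conv Omega_iff configs_iff
        by (intro conjI) (rule Sbp, rule cB', rule cv', rule ag)
      moreover have "cS (\<psi> XY) = S" unfolding \<psi>_def by (simp add: cS_def)
      ultimately show "\<psi> XY \<in> A" unfolding A_def by simp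
    qed
  qed
  have "card A = card A'" by (rule bij_betw_same_card[OF bij])
  also have "\<dots> = 2 ^ card (DB S) * 2 ^ card Dv"
  proof -
    have "finite (DB S)" unfolding DB_def
      using finSi k1 by (intro finite_SigmaI) auto
    moreover have "finite Dv" unfolding Dv_def by auto
    ultimately show ?thesis unfolding A'_def by (simp add: card_cartesian_product card_Pow)
  qed
  also have "card (DB S) = (\<Sum>i\<in>{k..r}. (m - a i) * m)"
  proof -
    have "card (DB S) = (\<Sum>i\<in>{k..r}. card ({..<m - a i} \<times> S i))" unfolding DB_def
      by (rule card_SigmaI) (use finSi k1 in auto)
    also have "\<dots> = (\<Sum>i\<in>{k..r}. (m - a i) * m)"
    proof (rule sum.cong)
      fix i assume "i \<in> {k..r}"
      then have "i \<in> {1..r}" using k1 by auto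
      then show "card ({..<m - a i} \<times> S i) = (m - a i) * m" using bp_facts(2)[OF Sbp] by (simp add: card_cartesian_product)
    qed simp
    finally show ?thesis .
  qed
  finally show ?thesis unfolding A_def N0_def .
qed

lemma finParts: "finite Parts"
  unfolding Parts_def by (rule finite_subset[OF _ finite_block_partitions]) auto

lemma cardW:
  assumes W: "W \<subseteq> Parts"
  shows "card {\<omega>\<in>\<Omega>. cS \<omega> \<in> W} = N0 * card W"
proof -
  have finW: "finite W" using W finParts finite_subset by auto
  have eq: "{\<omega>\<in>\<Omega>. cS \<omega> \<in> W} = (\<Union>S\<in>W. {\<omega>\<in>\<Omega>. cS \<omega> = S})" by auto
  have "card (\<Union>S\<in>W. {\<omega>\<in>\<Omega>. cS \<omega> = S}) = (\<Sum>S\<in>W. card {\<omega>\<in>\<Omega>. cS \<omega> = S})"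
    by (rule card_UN_disjoint[OF finW]) (use finOmega in auto)
  also have "\<dots> = (\<Sum>S\<in>W. N0)" using fiberS W by (intro sum.cong) auto
  finally show ?thesis using eq by simp
qed


lemma F3_bound:
  assumes iK: "i \<in> {k<..r}" and TA: "2*T \<le> A" and tm: "(A - 2*T) div 2 \<le> m" and m0: "0 < m"
  shows "real (card ({\<omega>. hh \<omega> k + A < hh \<omega> i + 2*T} \<inter> \<Omega>))
     \<le> (4*real m / (4*real m + real (A - 2*T)))^((A - 2*T) div 2) * real (card \<Omega>)"
proof (rule fiber_bound[OF finOmega, where g="\<lambda>\<omega>. (cS \<omega>)(k := {}, i := {})"])
  fix \<omega> assume om: "\<omega> \<in> \<Omega>"
  define D where "D = A - 2*T"
  define t where "t = D div 2"
  define \<rho> where "\<rho> = (4*real m / (4*real m + real D))^t"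
  define S where "S = cS \<omega>"
  define g where "g \<omega>' = (cS \<omega>')(k := {}, i := {})" for \<omega>'
  define E where "E = {\<omega>. hh \<omega> k + A < hh \<omega> i + 2*T}"
  define fib where "fib = {\<omega>'\<in>\<Omega>. g \<omega>' = g \<omega>}"
  have SP: "S \<in> Parts" unfolding S_def by (rule cS_Parts[OF om])
  have Sbp: "S \<in> block_partitions n r m" and Sag: "\<forall>j\<in>{1..<k}. S j = cS \<omega>0 j" using SP unfolding Parts_def by auto
  have kr': "k \<in> {1..r}" and ir: "i \<in> {1..r}" and ki: "k \<noteq> i" and kli: "k < i" using k1 kr iK by auto
  define U where "U = S k \<union> S i"
  have cU: "card U = 2*m" unfolding U_def by (rule card_union_blocks[OF Sbp kr' ir ki])
  have finU: "finite U" using cU m0 by (metis card.infinite mult_is_0 neq0_conv zero_neq_numeral)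
  define QS where "QS = {Q. Q \<subseteq> U \<and> card Q = m}"
  define \<sigma> where "\<sigma> Q = S(k := U - Q, i := Q)" for Q
  define Mset where "Mset = HS \<inter> U"
  define u where "u = card Mset"
  define x0 where "x0 = (u + D) div 2 + 1"
  define QSbad where "QSbad = {Q. Q \<subseteq> U \<and> card Q = m \<and> x0 \<le> card (Q \<inter> Mset)}"
  have finQS: "finite QS" unfolding QS_def using finU by auto
  have sP: "\<sigma> Q \<in> Parts" if "Q \<in> QS" for Q
  proof -
    have "\<sigma> Q \<in> block_partitions n r m" unfolding \<sigma>_def U_def
      by (rule swap_partition[OF Sbp kr' ir ki]) (use that in \<open>auto simp: QS_def U_def\<close>)
    moreover have "\<forall>j\<in>{1..<k}. \<sigma> Q j = cS \<omega>0 j" using Sag kli unfolding \<sigma>_def by auto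
    ultimately show ?thesis unfolding Parts_def by simp
  qed
  have inj\<sigma>: "inj_on \<sigma> QS"
  proof (rule inj_onI)
    fix Q1 Q2 assume "\<sigma> Q1 = \<sigma> Q2"
    then have "\<sigma> Q1 i = \<sigma> Q2 i" by simp
    then show "Q1 = Q2" unfolding \<sigma>_def by simp
  qed
  have fib_eq: "fib = {\<omega>'\<in>\<Omega>. cS \<omega>' \<in> \<sigma> ` QS}"
  proof
    show "fib \<subseteq> {\<omega>'\<in>\<Omega>. cS \<omega>' \<in> \<sigma> ` QS}"
    proof
      fix \<omega>' assume o': "\<omega>' \<in> fib"
      have o'O: "\<omega>' \<in> \<Omega>" using o' unfolding fib_def by simp
      define S' where "S' = cS \<omega>'"
      have S'bp: "S' \<in> block_partitions n r m" using cS_Parts[OF o'O] unfolding S'_def Parts_def by simp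
      have ge: "g \<omega>' = g \<omega>" using o' unfolding fib_def by simp
      have agree: "S' j = S j" if "j \<noteq> k" "j \<noteq> i" for j
        using fun_cong[OF ge, of j] that unfolding g_def S'_def S_def by simp
      have pf: "S' i \<subseteq> U" "S' k = U - S' i" using partition_fiber[OF Sbp S'bp kr' ir ki agree] unfolding U_def by auto
      have cS'i: "card (S' i) = m" using bp_facts(2)[OF S'bp ir] .
      have "S' = \<sigma> (S' i)"
      proof
        fix j show "S' j = \<sigma> (S' i) j" unfolding \<sigma>_def using pf agree[of j] ki by (cases "j = k"; cases "j = i") auto
      qed
      moreover have "S' i \<in> QS" unfolding QS_def using pf cS'i by auto
      ultimately show "\<omega>' \<in> {\<omega>'\<in>\<Omega>. cS \<omega>' \<in> \<sigma> ` QS}" using o'O unfolding S'_def by auto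
    qed
    show "{\<omega>'\<in>\<Omega>. cS \<omega>' \<in> \<sigma> ` QS} \<subseteq> fib"
    proof
      fix \<omega>' assume "\<omega>' \<in> {\<omega>'\<in>\<Omega>. cS \<omega>' \<in> \<sigma> ` QS}"
      then obtain Q where "\<omega>' \<in> \<Omega>" "cS \<omega>' = \<sigma> Q" by auto
      moreover have "(\<sigma> Q)(k := {}, i := {}) = S(k := {}, i := {})" unfolding \<sigma>_def by (intro ext) auto
      ultimately show "\<omega>' \<in> fib" unfolding fib_def g_def S_def by simp
    qed
  qed
  have cfib: "card fib = N0 * ((2*m) choose m)"
  proof -
    have "card fib = N0 * card (\<sigma> ` QS)" unfolding fib_eq by (rule cardW) (use sP in auto)
    also have "card (\<sigma> ` QS) = card QS" by (rule card_image[OF inj\<sigma>])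
    also have "card QS = (2*m) choose m" unfolding QS_def using n_subsets[OF finU, of m] cU by simp
    finally show ?thesis .
  qed
  have sub: "E \<inter> fib \<subseteq> {\<omega>'\<in>\<Omega>. cS \<omega>' \<in> \<sigma> ` QSbad}"
  proof
    fix \<omega>' assume o': "\<omega>' \<in> E \<inter> fib"
    then obtain Q where o'O: "\<omega>' \<in> \<Omega>" and Q: "Q \<in> QS" and cs: "cS \<omega>' = \<sigma> Q" using fib_eq by auto
    have QU: "Q \<subseteq> U" and cQ: "card Q = m" using Q unfolding QS_def by auto
    define q where "q = card (Q \<inter> Mset)"
    have finM: "finite Mset" unfolding Mset_def using finU by simp
    have qu: "q \<le> u" unfolding q_def u_def by (rule card_mono[OF finM]) auto
    have hk: "hh \<omega>' k = u - q"
    proof -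
      have "HS \<inter> cS \<omega>' k = Mset - (Q \<inter> Mset)" unfolding cs \<sigma>_def Mset_def using ki by auto
      then have "hh \<omega>' k = card (Mset - (Q \<inter> Mset))" unfolding hh_def by simp
      also have "\<dots> = u - q" unfolding u_def q_def by (rule card_Diff_subset) (use finM in auto)
      finally show ?thesis .
    qed
    have hi: "hh \<omega>' i = q"
    proof -
      have "HS \<inter> cS \<omega>' i = Q \<inter> Mset" unfolding cs \<sigma>_def Mset_def using QU by auto
      then show ?thesis unfolding hh_def q_def by simp
    qed
    have "u - q + A < q + 2*T" using o' hk hi unfolding E_def by simp
    then have "u + D < 2*q" unfolding D_def using qu TA by linarith
    then have "x0 \<le> q" unfolding x0_def by linarith
    then have "Q \<in> QSbad" unfolding QSbad_def q_def using QU cQ by auto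
    then show "\<omega>' \<in> {\<omega>'\<in>\<Omega>. cS \<omega>' \<in> \<sigma> ` QSbad}" using o'O cs by auto
  qed
  have QSbQS: "QSbad \<subseteq> QS" unfolding QSbad_def QS_def by auto
  have "card (E \<inter> fib) \<le> card {\<omega>'\<in>\<Omega>. cS \<omega>' \<in> \<sigma> ` QSbad}"
    by (rule card_mono[OF _ sub]) (use finOmega in auto)
  also have "\<dots> = N0 * card (\<sigma> ` QSbad)" by (rule cardW) (use sP QSbQS in auto)
  also have "\<dots> \<le> N0 * card QSbad" by (intro mult_le_mono2 card_image_le) (use finQS QSbQS finite_subset in auto)
  finally have c1: "real (card (E \<inter> fib)) \<le> real N0 * real (card QSbad)" by (metis of_nat_le_iff of_nat_mult)
  have tl: "real (card QSbad) \<le> real ((2*m) choose m) * \<rho>"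
    unfolding QSbad_def \<rho>_def
  proof (rule tail_lemma[OF finU cU])
    show "Mset \<subseteq> U" unfolding Mset_def by auto
    show "card Mset + D \<le> 2 * x0" unfolding x0_def u_def by presburger
    show "2 * t \<le> D" unfolding t_def by linarith
    show "t \<le> m" using tm unfolding t_def D_def .
  qed (rule m0)
  have "real (card (E \<inter> fib)) \<le> real N0 * (real ((2*m) choose m) * \<rho>)"
  proof -
    have "real N0 * real (card QSbad) \<le> real N0 * (real ((2*m) choose m) * \<rho>)"
      using tl by (intro mult_left_mono) auto
    then show ?thesis using c1 by linarith
  qed
  also have "\<dots> = \<rho> * real (card fib)" unfolding cfib by simp
  finally show "real (card ({\<omega>. hh \<omega> k + A < hh \<omega> i + 2*T} \<inter> {\<omega>'\<in>\<Omega>. (cS \<omega>')(k := {}, i := {}) = (cS \<omega>)(k := {}, i := {})}))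
     \<le> (4*real m / (4*real m + real (A - 2*T)))^((A - 2*T) div 2) * real (card {\<omega>'\<in>\<Omega>. (cS \<omega>')(k := {}, i := {}) = (cS \<omega>)(k := {}, i := {})})"
    unfolding E_def fib_def g_def \<rho>_def t_def D_def .
qed

end


lemma block_sat_cong:
  assumes "\<forall>l\<in>cS \<omega> i. x l = x' l"
  shows "block_sat m a \<omega> i x = block_sat m a \<omega> i x'"
proof -
  have "\<And>j. {l\<in>cS \<omega> i. cB \<omega> i j l \<and> x l} = {l\<in>cS \<omega> i. cB \<omega> i j l \<and> x' l}" using assms by auto
  then show ?thesis unfolding block_sat_def by simp
qed

lemma muH_prod:
  assumes om: "\<omega> \<in> configs n r m a" and HS: "HS \<subseteq> {1..n}"
  shows "muH n r m a \<omega> HS y = (\<Prod>i\<in>{1..r}. muiH m a \<omega> i HS y)"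
proof -
  define S where "S = cS \<omega>"
  have Sbp: "S \<in> block_partitions n r m" using om unfolding S_def configs_def by simp
  define Xf where "Xf = {x \<in> {1..n} \<rightarrow>\<^sub>E (UNIV::bool set). (\<forall>l\<in>HS. x l = y l) \<and> (\<forall>i\<in>{1..r}. block_sat m a \<omega> i x)}"
  define Xi where "Xi i = {x \<in> S i \<rightarrow>\<^sub>E (UNIV::bool set). (\<forall>l\<in>HS \<inter> S i. x l = y l) \<and> block_sat m a \<omega> i x}" for i
  define f where "f x = (\<lambda>i\<in>{1..r}. restrict x (S i))" for x :: "nat \<Rightarrow> bool"
  have Ssub: "S i \<subseteq> {1..n}" if "i \<in> {1..r}" for i using bp_facts(1)[OF Sbp that] .
  have Sdisj: "S i \<inter> S j = {}" if "i \<in> {1..r}" "j \<in> {1..r}" "i \<noteq> j" for i j using bp_facts(3)[OF Sbp that] .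
  have Sun: "\<exists>i\<in>{1..r}. l \<in> S i" if "l \<in> {1..n}" for l
  proof -
    have "l \<in> (\<Union>i\<in>{1..r}. S i)" using bp_facts(4)[OF Sbp] that by simp
    then show ?thesis by blast
  qed
  have bsr: "block_sat m a \<omega> i (restrict x (S i)) = block_sat m a \<omega> i x" for i x
    by (rule block_sat_cong) (simp add: S_def)
  have inj: "inj_on f Xf"
  proof (rule inj_onI)
    fix x1 x2 assume x1: "x1 \<in> Xf" and x2: "x2 \<in> Xf" and e: "f x1 = f x2"
    show "x1 = x2"
    proof
      fix l
      show "x1 l = x2 l"
      proof (cases "l \<in> {1..n}")
        case True
        then obtain i where i: "i \<in> {1..r}" "l \<in> S i" using Sun by blast
        have "f x1 i l = f x2 i l" using e by simp
        then show ?thesis using i unfolding f_def by simp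
      next
        case False
        then show ?thesis using x1 x2 unfolding Xf_def by (auto simp: PiE_def extensional_def)
      qed
    qed
  qed
  have img: "f ` Xf = PiE {1..r} Xi"
  proof
    show "f ` Xf \<subseteq> PiE {1..r} Xi"
    proof (rule image_subsetI)
      fix x assume x: "x \<in> Xf"
      show "f x \<in> PiE {1..r} Xi"
        unfolding f_def Xi_def using x bsr unfolding Xf_def by (auto simp: PiE_def)
    qed
    show "PiE {1..r} Xi \<subseteq> f ` Xf"
    proof
      fix z assume z: "z \<in> PiE {1..r} Xi"
      define ix where "ix l = (THE i. i \<in> {1..r} \<and> l \<in> S i)" for l
      have ixI: "ix l = i" if "i \<in> {1..r}" "l \<in> S i" for i l
        unfolding ix_def
      proof (rule the_equality)
        show "i \<in> {1..r} \<and> l \<in> S i" using that by simp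
        fix i' assume "i' \<in> {1..r} \<and> l \<in> S i'"
        then show "i' = i" using Sdisj[of i i'] that by auto
      qed
      define x where "x l = (if l \<in> {1..n} then z (ix l) l else undefined)" for l
      have zi: "z i \<in> Xi i" if "i \<in> {1..r}" for i using z that by auto
      have resx: "restrict x (S i) = z i" if i: "i \<in> {1..r}" for i
      proof
        fix l show "restrict x (S i) l = z i l"
        proof (cases "l \<in> S i")
          case True
          then show ?thesis using ixI[OF i True] Ssub[OF i] unfolding x_def by auto
        next
          case False
          then show ?thesis using zi[OF i] unfolding Xi_def by (auto simp: PiE_def extensional_def)
        qed
      qed
      have "f x = z"
      proof
        fix i show "f x i = z i"
        proof (cases "i \<in> {1..r}")
          case True then show ?thesis using resx unfolding f_def by simp
        next
          case False then show ?thesis using z unfolding f_def by (auto simp: PiE_def extensional_def)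
        qed
      qed
      moreover have "x \<in> Xf"
      proof -
        have "x \<in> {1..n} \<rightarrow>\<^sub>E (UNIV::bool set)" unfolding x_def by (auto simp: PiE_def extensional_def)
        moreover have "\<forall>l\<in>HS. x l = y l"
        proof
          fix l assume l: "l \<in> HS"
          then have "l \<in> {1..n}" using HS by auto
          then obtain i where i: "i \<in> {1..r}" "l \<in> S i" using Sun by blast
          have "restrict x (S i) l = z i l" using resx[OF i(1)] by simp
          then have "x l = z i l" using i by simp
          then show "x l = y l" using zi[OF i(1)] l i(2) unfolding Xi_def by auto
        qed
        moreover have "\<forall>i\<in>{1..r}. block_sat m a \<omega> i x"
        proof
          fix i assume i: "i \<in> {1..r}"
          have "block_sat m a \<omega> i (z i)" using zi[OF i] unfolding Xi_def by auto
          then show "block_sat m a \<omega> i x" using bsr[of i x] resx[OF i] by simp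
        qed
        ultimately show ?thesis unfolding Xf_def by simp
      qed
      ultimately show "z \<in> f ` Xf" by blast
    qed
  qed
  have "card Xf = card (PiE {1..r} Xi)" using card_image[OF inj] img by simp
  also have "\<dots> = (\<Prod>i\<in>{1..r}. card (Xi i))" by (rule card_PiE) simp
  finally have "card Xf = (\<Prod>i\<in>{1..r}. card (Xi i))" .
  then show ?thesis unfolding muH_def muiH_def Xf_def Xi_def S_def by (simp add: Int_commute)
qed



context hsetup begin

lemma card_HS_blocks:
  assumes om: "\<omega> \<in> \<Omega>" and I: "I \<subseteq> {1..r}"
  shows "card (HS \<inter> (\<Union>i\<in>I. cS \<omega> i)) = (\<Sum>i\<in>I. hh \<omega> i)"
proof -
  have Sbp: "cS \<omega> \<in> block_partitions n r m" using Omega_conf[OF om] unfolding configs_def by simp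
  have finI: "finite I" using I finite_subset by auto
  have "HS \<inter> (\<Union>i\<in>I. cS \<omega> i) = (\<Union>i\<in>I. HS \<inter> cS \<omega> i)" by auto
  moreover have "card (\<Union>i\<in>I. HS \<inter> cS \<omega> i) = (\<Sum>i\<in>I. card (HS \<inter> cS \<omega> i))"
  proof (rule card_UN_disjoint[OF finI])
    show "\<forall>i\<in>I. finite (HS \<inter> cS \<omega> i)" using block_facts(3)[OF om] I by auto
    show "\<forall>i\<in>I. \<forall>j\<in>I. i \<noteq> j \<longrightarrow> (HS \<inter> cS \<omega> i) \<inter> (HS \<inter> cS \<omega> j) = {}"
      using bp_facts(3)[OF Sbp] I by blast
  qed
  ultimately show ?thesis unfolding hh_def by simp
qed

lemma good_event:
  assumes om: "\<omega> \<in> \<Omega>" and aA: "\<forall>i\<in>{1..r}. a i = i * A"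
    and n1: "\<not> (mu \<omega> k \<noteq> 0 \<and> a k + T \<le> hh \<omega> k)"
    and n2: "\<forall>i\<in>{k<..r}. \<not> (mu \<omega> i \<noteq> 2 powr (real (a i) - real (hh \<omega> i)) \<and> hh \<omega> i + T \<le> a i)"
    and n3: "\<forall>i\<in>{k<..r}. \<not> (hh \<omega> k + A < hh \<omega> i + 2*T)"
  shows "muH n r m a \<omega> HS y = (\<Prod>i\<in>{1..k}. muiH m a \<omega> i HS y) *
                     2 powr (- real (card HS)
                             + real (card (HS \<inter> (\<Union>i\<in>{1..k}. cS \<omega> i)))
                             + (\<Sum>i\<in>{k<..r}. real (a i)))"
proof -
  have split: "{1..r} = {1..k} \<union> {k<..r}" using kr k1 by auto
  have disj: "{1..k} \<inter> {k<..r} = {}" by auto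
  have mH: "muH n r m a \<omega> HS y = (\<Prod>i\<in>{1..k}. mu \<omega> i) * (\<Prod>i\<in>{k<..r}. mu \<omega> i)"
    unfolding muH_prod[OF Omega_conf[OF om] HS] mu_def[symmetric] split
    by (rule prod.union_disjoint) auto
  show ?thesis
  proof (cases "mu \<omega> k = 0")
    case True
    have "(\<Prod>i\<in>{1..k}. mu \<omega> i) = 0" using True k1 by (intro prod_zero) auto
    then show ?thesis using mH unfolding mu_def by simp
  next
    case False
    then have hk: "hh \<omega> k < a k + T" using n1 by simp
    have ak: "a k = k * A" using aA k1 kr by auto
    have each: "mu \<omega> i = 2 powr (real (a i) - real (hh \<omega> i))" if i: "i \<in> {k<..r}" for i
    proof -
      have ai: "a i = i * A" using aA i k1 by auto
      have "(k+1) * A \<le> i * A" using i by (intro mult_right_mono) auto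
      then have "a k + A \<le> a i" using ak ai by simp
      moreover have "\<not> (hh \<omega> k + A < hh \<omega> i + 2*T)" using n3 i by blast
      then have "hh \<omega> i + 2*T \<le> hh \<omega> k + A" by linarith
      ultimately have "hh \<omega> i + T \<le> a i" using hk by linarith
      then show ?thesis using n2 i by auto
    qed
    have "(\<Prod>i\<in>{k<..r}. mu \<omega> i) = (\<Prod>i\<in>{k<..r}. 2 powr (real (a i) - real (hh \<omega> i)))"
      using each by (rule prod.cong[OF refl])
    also have "\<dots> = 2 powr (\<Sum>i\<in>{k<..r}. (real (a i) - real (hh \<omega> i)))" by (simp add: powr_sum)
    also have "(\<Sum>i\<in>{k<..r}. (real (a i) - real (hh \<omega> i)))
        = - real (card HS) + real (card (HS \<inter> (\<Union>i\<in>{1..k}. cS \<omega> i))) + (\<Sum>i\<in>{k<..r}. real (a i))"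
    proof -
      have c1: "card (HS \<inter> (\<Union>i\<in>{1..k}. cS \<omega> i)) = (\<Sum>i\<in>{1..k}. hh \<omega> i)"
        by (rule card_HS_blocks[OF om]) (use kr in auto)
      have "HS \<inter> (\<Union>i\<in>{1..r}. cS \<omega> i) = HS"
      proof -
        have "cS \<omega> \<in> block_partitions n r m" using Omega_conf[OF om] unfolding configs_def by simp
        then have "(\<Union>i\<in>{1..r}. cS \<omega> i) = {1..n}" by (rule bp_facts(4))
        then show ?thesis using HS by auto
      qed
      then have c2: "card HS = (\<Sum>i\<in>{1..r}. hh \<omega> i)" using card_HS_blocks[OF om, of "{1..r}"] by simp
      have c3: "(\<Sum>i\<in>{1..r}. hh \<omega> i) = (\<Sum>i\<in>{1..k}. hh \<omega> i) + (\<Sum>i\<in>{k<..r}. hh \<omega> i)"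
        unfolding split by (rule sum.union_disjoint) auto
      have "(\<Sum>i\<in>{k<..r}. (real (a i) - real (hh \<omega> i))) = (\<Sum>i\<in>{k<..r}. real (a i)) - real (\<Sum>i\<in>{k<..r}. hh \<omega> i)"
        by (simp add: sum_subtractf)
      then show ?thesis using c1 c2 c3 by simp
    qed
    finally show ?thesis using mH unfolding mu_def by simp
  qed
qed

lemma main_bound:
  assumes aA: "\<forall>i\<in>{1..r}. a i = i * A" and TA: "2*T \<le> A" and tm: "(A - 2*T) div 2 \<le> m" and m0: "0 < m"
  shows "measure_pmf.prob (pmf_of_set \<Omega>)
                {\<omega>. muH n r m a \<omega> HS y =
                     (\<Prod>i\<in>{1..k}. muiH m a \<omega> i HS y) *
                     2 powr (- real (card HS)
                             + real (card (HS \<inter> (\<Union>i\<in>{1..k}. cS \<omega> i)))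
                             + (\<Sum>i\<in>{k<..r}. real (a i)))}
     \<ge> 1 - (1 / 2^T + real (r - k) * (1 / 2^T + (4*real m / (4*real m + real (A - 2*T)))^((A - 2*T) div 2)))"
proof -
  define G where "G = {\<omega>. muH n r m a \<omega> HS y =
                     (\<Prod>i\<in>{1..k}. muiH m a \<omega> i HS y) *
                     2 powr (- real (card HS)
                             + real (card (HS \<inter> (\<Union>i\<in>{1..k}. cS \<omega> i)))
                             + (\<Sum>i\<in>{k<..r}. real (a i)))}"
  define p where "p = 1 / (2::real)^T"
  define \<tau> where "\<tau> = (4*real m / (4*real m + real (A - 2*T)))^((A - 2*T) div 2)"
  define E1 where "E1 = {\<omega>. mu \<omega> k \<noteq> 0 \<and> a k + T \<le> hh \<omega> k}"
  define E2 where "E2 i = {\<omega>. mu \<omega> i \<noteq> 2 powr (real (a i) - real (hh \<omega> i)) \<and> hh \<omega> i + T \<le> a i}" for i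
  define E3 where "E3 i = {\<omega>. hh \<omega> k + A < hh \<omega> i + 2*T}" for i
  have ne: "\<Omega> \<noteq> {}" using om0_Omega by auto
  have bad: "\<Omega> - G \<subseteq> (E1 \<inter> \<Omega>) \<union> (\<Union>i\<in>{k<..r}. (E2 i \<inter> \<Omega>) \<union> (E3 i \<inter> \<Omega>))"
  proof
    fix \<omega> assume o: "\<omega> \<in> \<Omega> - G"
    show "\<omega> \<in> (E1 \<inter> \<Omega>) \<union> (\<Union>i\<in>{k<..r}. (E2 i \<inter> \<Omega>) \<union> (E3 i \<inter> \<Omega>))"
    proof (rule ccontr)
      assume nb: "\<not> ?thesis"
      have oO: "\<omega> \<in> \<Omega>" using o by simp
      have x1: "\<omega> \<notin> E1" using nb oO by blast
      have x2: "\<forall>i\<in>{k<..r}. \<omega> \<notin> E2 i" using nb oO by blast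
      have x3: "\<forall>i\<in>{k<..r}. \<omega> \<notin> E3 i" using nb oO by blast
      have h1: "\<not> (mu \<omega> k \<noteq> 0 \<and> a k + T \<le> hh \<omega> k)" using x1 unfolding E1_def by (simp only: mem_Collect_eq simp_thms)
      have h2: "\<forall>i\<in>{k<..r}. \<not> (mu \<omega> i \<noteq> 2 powr (real (a i) - real (hh \<omega> i)) \<and> hh \<omega> i + T \<le> a i)"
        using x2 unfolding E2_def by (simp only: mem_Collect_eq simp_thms)
      have h3: "\<forall>i\<in>{k<..r}. \<not> (hh \<omega> k + A < hh \<omega> i + 2*T)" using x3 unfolding E3_def by (simp only: mem_Collect_eq simp_thms)
      have "\<omega> \<in> G" unfolding G_def mem_Collect_eq by (rule good_event[OF oO aA h1 h2 h3])
      then show False using o by blast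
    qed
  qed
  have finK: "finite {k<..r}" by simp
  have "real (card (\<Omega> - G)) \<le> real (card ((E1 \<inter> \<Omega>) \<union> (\<Union>i\<in>{k<..r}. (E2 i \<inter> \<Omega>) \<union> (E3 i \<inter> \<Omega>))))"
  proof -
    have "finite ((E1 \<inter> \<Omega>) \<union> (\<Union>i\<in>{k<..r}. (E2 i \<inter> \<Omega>) \<union> (E3 i \<inter> \<Omega>)))"
      by (rule finite_subset[OF _ finOmega]) blast
    then show ?thesis by (subst of_nat_le_iff, rule card_mono[OF _ bad])
  qed
  also have "\<dots> \<le> real (card (E1 \<inter> \<Omega>)) + real (card (\<Union>i\<in>{k<..r}. (E2 i \<inter> \<Omega>) \<union> (E3 i \<inter> \<Omega>)))"
    by (simp only: of_nat_add[symmetric] of_nat_le_iff card_Un_le)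
  also have "real (card (\<Union>i\<in>{k<..r}. (E2 i \<inter> \<Omega>) \<union> (E3 i \<inter> \<Omega>)))
      \<le> (\<Sum>i\<in>{k<..r}. real (card ((E2 i \<inter> \<Omega>) \<union> (E3 i \<inter> \<Omega>))))"
    unfolding of_nat_sum[symmetric] of_nat_le_iff by (rule card_UN_le[OF finK])
  also have "\<dots> \<le> (\<Sum>i\<in>{k<..r}. p * real (card \<Omega>) + \<tau> * real (card \<Omega>))"
  proof (rule sum_mono)
    fix i assume i: "i \<in> {k<..r}"
    have "real (card ((E2 i \<inter> \<Omega>) \<union> (E3 i \<inter> \<Omega>))) \<le> real (card (E2 i \<inter> \<Omega>)) + real (card (E3 i \<inter> \<Omega>))"
      by (simp only: of_nat_add[symmetric] of_nat_le_iff card_Un_le)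
    also have "\<dots> \<le> p * real (card \<Omega>) + \<tau> * real (card \<Omega>)"
      using F2_bound[OF i] F3_bound[OF i TA tm m0] unfolding E2_def E3_def p_def \<tau>_def by (intro add_mono) auto
    finally show "real (card ((E2 i \<inter> \<Omega>) \<union> (E3 i \<inter> \<Omega>))) \<le> p * real (card \<Omega>) + \<tau> * real (card \<Omega>)" .
  qed
  also have "real (card (E1 \<inter> \<Omega>)) \<le> p * real (card \<Omega>)" using F1_bound unfolding E1_def p_def by simp
  finally have cb: "real (card (\<Omega> - G)) \<le> (p + real (r - k) * (p + \<tau>)) * real (card \<Omega>)"
    by (simp add: algebra_simps)
  have cpos: "real (card \<Omega>) > 0" using finOmega ne by (simp add: card_gt_0_iff)
  have "card (\<Omega> \<inter> G) = card \<Omega> - card (\<Omega> - G)"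
    using finOmega by (metis Diff_Diff_Int card_Diff_subset finite_Diff Diff_subset)
  moreover have "card (\<Omega> - G) \<le> card \<Omega>" using finOmega by (intro card_mono) auto
  ultimately have cg: "real (card (\<Omega> \<inter> G)) = real (card \<Omega>) - real (card (\<Omega> - G))" by simp
  have "measure_pmf.prob (pmf_of_set \<Omega>) G = real (card (\<Omega> \<inter> G)) / real (card \<Omega>)"
    by (rule measure_pmf_of_set[OF ne finOmega])
  also have "\<dots> = 1 - real (card (\<Omega> - G)) / real (card \<Omega>)" using cg cpos by (simp add: field_simps)
  also have "\<dots> \<ge> 1 - (p + real (r - k) * (p + \<tau>))" using cb cpos by (simp add: field_simps)
  finally show ?thesis unfolding G_def p_def \<tau>_def .
qed

end


lemma cube_third:
  fixes x :: real assumes "x > 0"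
  shows "x powr (1/3) * x powr (1/3) * x powr (1/3) = x" "x powr (2/3) = x powr (1/3) * x powr (1/3)"
proof -
  have "x powr (1/3) * x powr (1/3) * x powr (1/3) = x powr (1/3 + 1/3 + 1/3)" by (simp only: powr_add)
  also have "x powr (1/3 + 1/3 + 1/3) = x powr 1" by simp
  also have "\<dots> = x" using assms by (simp add: powr_one)
  finally show "x powr (1/3) * x powr (1/3) * x powr (1/3) = x" .
  have "x powr (1/3) * x powr (1/3) = x powr (1/3 + 1/3)" by (simp only: powr_add)
  then show "x powr (2/3) = x powr (1/3) * x powr (1/3)" by simp
qed

locale params =
  fixes c :: real and n r m :: nat and a :: "nat \<Rightarrow> nat"
  assumes c: "c > 0" and n2: "n \<ge> 2" and hr: "real r = hi_r c n" and hm: "real m = hi_m c n"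
    and ha: "\<forall>i\<in>{1..r}. real (a i) = hi_a c n i" and r2: "r \<ge> 2"
begin

definition L where "L = (c+2) * log 2 (real n)"
definition T where "T = nat \<lceil>L\<rceil>"
definition A where "A = a 1"
definition \<alpha> where "\<alpha> = real n powr (1/3)"
definition \<beta> where "\<beta> = L powr (1/3)"

lemma L2: "L \<ge> 2"
proof -
  have "log 2 (real n) \<ge> log 2 2" using n2 by (subst log_le_cancel_iff) auto
  then have "log 2 (real n) \<ge> 1" by simp
  moreover have "c + 2 \<ge> 2" using c by simp
  ultimately have "(c+2) * log 2 (real n) \<ge> 2 * 1" by (intro mult_mono) auto
  then show ?thesis unfolding L_def by simp
qed

lemma npos: "real n > 0" using n2 by simp
lemma apos: "\<alpha> > 0" unfolding \<alpha>_def using npos by simp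
lemma bpos: "\<beta> > 0" unfolding \<beta>_def using L2 by simp
lemma a3: "\<alpha> * \<alpha> * \<alpha> = real n" unfolding \<alpha>_def using cube_third(1)[OF npos] .
lemma b3: "\<beta> * \<beta> * \<beta> = L" unfolding \<beta>_def using cube_third(1) L2 by simp

lemma r_eq: "real r = \<alpha> / (4 * \<beta>)"
  using hr unfolding hi_r_def \<alpha>_def \<beta>_def L_def[symmetric] by (simp add: powr_divide)

lemma m_eq: "real m = 4 * \<alpha> * \<alpha> * \<beta>"
  using hm unfolding hi_m_def \<alpha>_def \<beta>_def L_def[symmetric] cube_third(2)[OF npos] by simp

lemma a_eq: "i \<in> {1..r} \<Longrightarrow> real (a i) = 12 * real i * \<alpha> * \<beta> * \<beta>"
  using ha unfolding hi_a_def \<alpha>_def \<beta>_def L_def[symmetric] using cube_third(2) L2 by auto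

lemma ab8: "\<alpha> \<ge> 8 * \<beta>"
proof -
  have "\<alpha> = 4 * \<beta> * real r" using r_eq bpos by (simp add: field_simps)
  moreover have "real r \<ge> 2" using r2 by simp
  ultimately show ?thesis using bpos by (simp add: mult_left_mono)
qed

lemma b1: "\<beta> \<ge> 1"
proof (rule ccontr)
  assume "\<not> \<beta> \<ge> 1"
  then have "\<beta> < 1" by simp
  then have "\<beta> * \<beta> * \<beta> < 1 * 1 * 1" using bpos by (intro mult_strict_mono) auto
  then show False using b3 L2 by simp
qed

lemma A_eq: "real A = 12 * \<alpha> * \<beta> * \<beta>"
  unfolding A_def using a_eq[of 1] r2 by simp

lemma aA: "\<forall>i\<in>{1..r}. a i = i * A"
proof
  fix i assume i: "i \<in> {1..r}"
  have "real (a i) = real i * real A" using a_eq[OF i] A_eq by simp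
  then show "a i = i * A" by (metis of_nat_eq_iff of_nat_mult)
qed

lemma am: "\<forall>i\<in>{1..r}. a i < m"
proof
  fix i assume i: "i \<in> {1..r}"
  have "real i \<le> real r" using i by simp
  then have "real (a i) \<le> 12 * real r * \<alpha> * \<beta> * \<beta>" using a_eq[OF i] apos bpos
    by (simp add: mult_right_mono)
  also have "\<dots> = 3 * \<alpha> * \<alpha> * \<beta>" using r_eq bpos by (simp add: field_simps)
  also have "\<dots> < real m" using m_eq apos bpos by simp
  finally show "a i < m" by simp
qed

lemma T_le: "real T \<le> L + 1" "L \<le> real T"
  unfolding T_def using L2 by (simp_all add: of_nat_nat ceiling_correct)

lemma bb_le: "\<beta> * \<beta> * \<beta> \<le> \<alpha> * \<beta> * \<beta> / 8"
proof -
  have "\<beta> * (\<beta> * \<beta>) \<le> (\<alpha> / 8) * (\<beta> * \<beta>)" using ab8 bpos by (intro mult_right_mono) auto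
  then show ?thesis by (simp add: mult_ac)
qed

lemma TA: "2 * T \<le> A"
proof -
  have "real (2*T) \<le> 2 * L + 2" using T_le by simp
  also have "\<dots> \<le> 4 * L" using L2 by simp
  also have "\<dots> = 4 * (\<beta> * \<beta> * \<beta>)" using b3 by simp
  also have "\<dots> \<le> 12 * \<alpha> * \<beta> * \<beta>" using bb_le apos bpos by (simp add: field_simps)
  also have "\<dots> = real A" using A_eq by simp
  finally show ?thesis by (simp only: of_nat_le_iff)
qed

definition D where "D = A - 2*T"

lemma D_ge: "real D \<ge> 11 * \<alpha> * \<beta> * \<beta>"
proof -
  have "real D = real A - 2 * real T" unfolding D_def using TA by (simp add: of_nat_diff)
  also have "\<dots> \<ge> 12 * \<alpha> * \<beta> * \<beta> - 4 * (\<beta> * \<beta> * \<beta>)" using A_eq T_le b3 L2 by simp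
  finally show ?thesis using bb_le by simp
qed

lemma D_le: "real D \<le> 12 * \<alpha> * \<beta> * \<beta>"
  unfolding D_def using A_eq TA by (simp add: of_nat_diff)

lemma m0: "0 < m" using m_eq apos bpos by (metis of_nat_0_less_iff mult_pos_pos zero_less_numeral)

lemma tm: "(A - 2*T) div 2 \<le> m"
proof -
  have "real D \<le> real m"
  proof -
    have "12 * \<alpha> * \<beta> * \<beta> \<le> 4 * \<alpha> * \<alpha> * \<beta>"
    proof -
      have "3 * \<beta> \<le> \<alpha>" using ab8 bpos by simp
      then have "(3 * \<beta>) * (4 * \<alpha> * \<beta>) \<le> \<alpha> * (4 * \<alpha> * \<beta>)" using apos bpos by (intro mult_right_mono) auto
      then show ?thesis by (simp add: mult_ac)
    qed
    then show ?thesis using D_le m_eq by simp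
  qed
  then have "D \<le> m" by simp
  then show ?thesis unfolding D_def[symmetric] by simp
qed


definition P where "P = real n powr (-(c+2))"

lemma P_eq: "P = 2 powr (-L)"
proof -
  have "P = (2 powr (log 2 (real n))) powr (-(c+2))" unfolding P_def using npos by (simp add: powr_log_cancel)
  also have "\<dots> = 2 powr (log 2 (real n) * (-(c+2)))" by (rule powr_powr)
  also have "log 2 (real n) * (-(c+2)) = -L" unfolding L_def by (simp add: algebra_simps)
  finally show ?thesis .
qed

lemma Ppos: "P > 0" unfolding P_def using npos by simp

lemma p_le: "1 / 2^T \<le> P"
proof -
  have "1 / (2::real)^T = 2 powr (- real T)" by (simp add: powr_minus powr_realpow divide_inverse)
  also have "\<dots> \<le> 2 powr (-L)" using T_le(2) by (intro powr_mono) auto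
  finally show ?thesis using P_eq by simp
qed

lemma tau_le: "(4*real m / (4*real m + real (A - 2*T)))^((A - 2*T) div 2) \<le> P"
proof -
  define t where "t = D div 2"
  define x where "x = real D / (4 * real m)"
  have mpos: "real m > 0" using m0 by simp
  have ab1: "\<alpha> * \<beta> * \<beta> \<ge> 8"
  proof -
    have "\<alpha> \<ge> 8" using ab8 b1 by linarith
    moreover have "\<beta> * \<beta> \<ge> 1 * 1" using b1 by (intro mult_mono) auto
    ultimately have "\<alpha> * (\<beta> * \<beta>) \<ge> 8 * 1" by (intro mult_mono) auto
    then show ?thesis by (simp add: mult_ac)
  qed
  have Dg: "real D \<ge> 88" using D_ge ab1 by linarith
  have x0: "0 \<le> x" unfolding x_def using mpos by simp
  have x1: "x \<le> 1/2"
  proof -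
    have "real D \<le> 12 * \<alpha> * \<beta> * \<beta>" by (rule D_le)
    also have "\<dots> \<le> 2 * real m"
    proof -
      have "12 * \<beta> \<le> 8 * \<alpha>" using ab8 bpos by linarith
      then have "(12 * \<beta>) * (\<alpha> * \<beta>) \<le> (8 * \<alpha>) * (\<alpha> * \<beta>)" using apos bpos by (intro mult_right_mono) auto
      then show ?thesis using m_eq by (simp add: mult_ac)
    qed
    finally show ?thesis unfolding x_def using mpos by (simp add: field_simps)
  qed
  have lnx: "ln (1 + x) \<ge> x / 2"
  proof -
    have "x - x^2 \<le> ln (1 + x)" using x0 x1 by (intro ln_one_plus_pos_lower_bound) auto
    moreover have "x * x \<le> x * (1/2)" using x0 x1 by (intro mult_left_mono) auto
    then have "x^2 \<le> x / 2" by (simp add: power2_eq_square)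
    ultimately show ?thesis by linarith
  qed
  have tg: "real t \<ge> 9/20 * real D"
  proof -
    have h: "D \<le> 2 * (D div 2) + 1" by presburger
    have "real D \<le> real (2 * (D div 2) + 1)" using h by (simp only: of_nat_le_iff)
    then have "real D - 1 \<le> 2 * real t" unfolding t_def by simp
    then have "9 * real D \<le> 20 * real t" using Dg by linarith
    then show ?thesis by simp
  qed
  have key: "real t * ln (1 + x) \<ge> L"
  proof -
    have "real t * ln (1 + x) \<ge> (9/20 * real D) * (x / 2)"
      using tg lnx x0 Dg by (intro mult_mono) auto
    also have "(9/20 * real D) * (x / 2) = 9 * (real D * real D) / (160 * real m)"
      unfolding x_def using mpos by (simp add: field_simps)
    also have "9 * (real D * real D) / (160 * real m) \<ge> L"
    proof -
      have DD: "real D * real D \<ge> (11 * \<alpha> * \<beta> * \<beta>) * (11 * \<alpha> * \<beta> * \<beta>)"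
        using D_ge apos bpos by (intro mult_mono) auto
      have "L * (160 * real m) = 640 * (\<alpha> * \<alpha>) * ((\<beta> * \<beta>) * (\<beta> * \<beta>))" using b3 m_eq by (simp add: algebra_simps)
      also have "\<dots> \<le> 1089 * (\<alpha> * \<alpha>) * ((\<beta> * \<beta>) * (\<beta> * \<beta>))" using apos bpos by simp
      also have "\<dots> = 9 * ((11 * \<alpha> * \<beta> * \<beta>) * (11 * \<alpha> * \<beta> * \<beta>))" by (simp add: algebra_simps)
      also have "\<dots> \<le> 9 * (real D * real D)" using DD by (simp only: mult_le_cancel_left_pos zero_less_numeral)
      finally show ?thesis using mpos by (simp add: field_simps)
    qed
    finally show ?thesis .
  qed
  have eqf: "4*real m / (4*real m + real D) = 1 / (1 + x)" unfolding x_def using mpos by (simp add: field_simps)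
  have "(1 / (1 + x))^t = exp (real t * ln (1 / (1 + x)))"
  proof -
    have "(1 / (1 + x)) = exp (ln (1 / (1 + x)))" using x0 by simp
    then have "(1 / (1 + x))^t = exp (ln (1 / (1 + x)))^t" by simp
    also have "\<dots> = exp (real t * ln (1 / (1 + x)))" by (rule exp_of_nat_mult[symmetric])
    finally show ?thesis .
  qed
  also have "ln (1 / (1 + x)) = - ln (1 + x)" using x0 by (simp add: ln_div)
  finally have "(1 / (1 + x))^t = exp (- (real t * ln (1 + x)))" by simp
  also have "\<dots> \<le> exp (- L)" using key by simp
  also have "\<dots> \<le> exp (- (L * ln 2))"
  proof -
    have "L * ln 2 \<le> L * 1" using L2 ln_2_less_1 by (intro mult_left_mono) auto
    then show ?thesis by simp
  qed
  also have "exp (- (L * ln 2)) = 2 powr (-L)" by (simp add: powr_def)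
  finally show ?thesis using eqf P_eq unfolding t_def D_def by simp
qed

lemma final_ineq:
  assumes "k \<le> r"
  shows "1 / 2^T + real (r - k) * (1 / 2^T + (4*real m / (4*real m + real (A - 2*T)))^((A - 2*T) div 2))
     \<le> 3 * real n powr (-(c + 5/3))"
proof -
  define \<tau> where "\<tau> = (4*real m / (4*real m + real (A - 2*T)))^((A - 2*T) div 2)"
  have tau0: "\<tau> \<ge> 0" unfolding \<tau>_def using m0 by simp
  have rk: "real (r - k) \<le> real r" by simp
  have r1: "real r \<ge> 1" using r2 by simp
  have "1 / 2^T + real (r - k) * (1 / 2^T + \<tau>) \<le> P + real r * (P + P)"
  proof (rule add_mono[OF p_le])
    have "real (r - k) * (1 / 2^T + \<tau>) \<le> real r * (1 / 2^T + \<tau>)" using rk tau0 by (intro mult_right_mono) auto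
    also have "\<dots> \<le> real r * (P + P)" using p_le tau_le unfolding \<tau>_def by (intro mult_left_mono add_mono) auto
    finally show "real (r - k) * (1 / 2^T + \<tau>) \<le> real r * (P + P)" .
  qed
  also have "\<dots> \<le> 3 * (real r * P)"
  proof -
    have "1 * P \<le> real r * P" using r1 Ppos by (intro mult_right_mono) auto
    then show ?thesis by (simp add: algebra_simps)
  qed
  also have "real r * P \<le> \<alpha> * P"
  proof -
    have e: "real r * (4 * \<beta>) = \<alpha>" using r_eq bpos by (simp add: field_simps)
    have "real r * 1 \<le> real r * (4 * \<beta>)" using b1 by (intro mult_left_mono) auto
    then have "real r \<le> \<alpha>" using e by simp
    then show ?thesis using Ppos by (intro mult_right_mono) auto
  qed
  also have "\<alpha> * P = real n powr (-(c + 5/3))"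
  proof -
    have "\<alpha> * P = real n powr (1/3 + (-(c+2)))" unfolding \<alpha>_def P_def by (simp only: powr_add)
    also have "1/3 + (-(c+2)) = -(c + 5/3)" by simp
    finally show ?thesis .
  qed
  finally show ?thesis unfolding \<tau>_def by simp
qed

end


theorem lemma5p6:
  fixes c :: real
  assumes "c > 0"
  shows "\<exists>N::nat. \<forall>n\<ge>N. \<forall>(r::nat) (m::nat) (a::nat \<Rightarrow> nat).
           real r = hi_r c n \<longrightarrow> real m = hi_m c n \<longrightarrow>
           (\<forall>i\<in>{1..r}. real (a i) = hi_a c n i) \<longrightarrow>
           (\<forall>k\<in>{1..r-1}. \<forall>(HS::nat set) (y::nat \<Rightarrow> bool) (\<omega>0::config).
              HS \<subseteq> {1..n} \<longrightarrow> \<omega>0 \<in> configs n r m a \<longrightarrow>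
              measure_pmf.prob (pmf_of_set (configs_given n r m a k \<omega>0))
                {\<omega>. muH n r m a \<omega> HS y =
                     (\<Prod>i\<in>{1..k}. muiH m a \<omega> i HS y) *
                     2 powr (- real (card HS)
                             + real (card (HS \<inter> (\<Union>i\<in>{1..k}. cS \<omega> i)))
                             + (\<Sum>i\<in>{k<..r}. real (a i)))}
              \<ge> 1 - 3 * real n powr (-(c + 5/3)))"
proof (intro exI[of _ 2] allI impI ballI)
  fix n r m :: nat and a :: "nat \<Rightarrow> nat" and k :: nat and HS :: "nat set" and y :: "nat \<Rightarrow> bool" and \<omega>0 :: config
  assume n2: "2 \<le> n" and hr: "real r = hi_r c n" and hm: "real m = hi_m c n"
    and ha: "\<forall>i\<in>{1..r}. real (a i) = hi_a c n i" and k: "k \<in> {1..r-1}"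
    and HS: "HS \<subseteq> {1..n}" and om0: "\<omega>0 \<in> configs n r m a"
  have r2: "r \<ge> 2" and k1: "1 \<le> k" and kr: "k < r" using k by auto
  interpret P: params c n r m a
    by unfold_locales (use assms n2 hr hm ha r2 in auto)
  interpret H: hsetup n r m a k \<omega>0 HS y P.T
    by unfold_locales (use k1 kr om0 HS P.am in auto)
  have "measure_pmf.prob (pmf_of_set (configs_given n r m a k \<omega>0))
                {\<omega>. muH n r m a \<omega> HS y =
                     (\<Prod>i\<in>{1..k}. muiH m a \<omega> i HS y) *
                     2 powr (- real (card HS)
                             + real (card (HS \<inter> (\<Union>i\<in>{1..k}. cS \<omega> i)))
                             + (\<Sum>i\<in>{k<..r}. real (a i)))}
     \<ge> 1 - (1 / 2^P.T + real (r - k) * (1 / 2^P.T + (4*real m / (4*real m + real (P.A - 2*P.T)))^((P.A - 2*P.T) div 2)))"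
    by (rule H.main_bound[OF P.aA P.TA P.tm P.m0])
  moreover have "1 / 2^P.T + real (r - k) * (1 / 2^P.T + (4*real m / (4*real m + real (P.A - 2*P.T)))^((P.A - 2*P.T) div 2))
     \<le> 3 * real n powr (-(c + 5/3))" by (rule P.final_ineq) (use kr in simp)
  ultimately show "measure_pmf.prob (pmf_of_set (configs_given n r m a k \<omega>0))
                {\<omega>. muH n r m a \<omega> HS y =
                     (\<Prod>i\<in>{1..k}. muiH m a \<omega> i HS y) *
                     2 powr (- real (card HS)
                             + real (card (HS \<inter> (\<Union>i\<in>{1..k}. cS \<omega> i)))
                             + (\<Sum>i\<in>{k<..r}. real (a i)))}
              \<ge> 1 - 3 * real n powr (-(c + 5/3))" by linarith
qed

end
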